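(* Let $B\subseteq A$ be a Frobenius extension of rings whose Frobenius homomorphism $E:A\to B$ is surjective, and let $P$ be a progenerator right $A$-module. Then the natural inclusion $\mathrm{End}\,P_A\hookrightarrow\mathrm{End}\,P_B$ is a Frobenius extension.
   Context: A ring extension $B\subseteq A$ is a Frobenius extension if $A_B$ is finitely generated projective and there is a $B$-$B$-bimodule map $E:A\to B$ (the Frobenius homomorphism) and elements $x_i,y_i\in A$ with $\sum_iE(ax_i)y_i=a=\sum_ix_iE(y_ia)$ for all $a\in A$. A progenerator is a finitely generated projective generator. $\mathrm{End}\,P_B$ denotes endomorphisms of $P$ regarded as a right $B$-module by restriction. *)

theory Defs
  imports "HOL-Algebra.Algebra"
begin

text \<open>The additive group of the module is the additive part of a ring record M;
  the scalar action is an explicit function act (m r written act m r).\<close>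

definition right_module :: "'r ring \<Rightarrow> 'm ring \<Rightarrow> ('m \<Rightarrow> 'r \<Rightarrow> 'm) \<Rightarrow> bool" where
  "right_module R M act \<longleftrightarrow> ring R \<and> abelian_group M \<and>
     (\<forall>m\<in>carrier M. \<forall>r\<in>carrier R. act m r \<in> carrier M) \<and>
     (\<forall>m\<in>carrier M. \<forall>n\<in>carrier M. \<forall>r\<in>carrier R. act (m \<oplus>\<^bsub>M\<^esub> n) r = act m r \<oplus>\<^bsub>M\<^esub> act n r) \<and>
     (\<forall>m\<in>carrier M. \<forall>r\<in>carrier R. \<forall>s\<in>carrier R. act m (r \<oplus>\<^bsub>R\<^esub> s) = act m r \<oplus>\<^bsub>M\<^esub> act m s) \<and>
     (\<forall>m\<in>carrier M. \<forall>r\<in>carrier R. \<forall>s\<in>carrier R. act m (r \<otimes>\<^bsub>R\<^esub> s) = act (act m r) s) \<and>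
     (\<forall>m\<in>carrier M. act m \<one>\<^bsub>R\<^esub> = m)"

definition rmod_hom :: "'r ring \<Rightarrow> 'm ring \<Rightarrow> ('m \<Rightarrow> 'r \<Rightarrow> 'm) \<Rightarrow> 'n ring \<Rightarrow> ('n \<Rightarrow> 'r \<Rightarrow> 'n)
    \<Rightarrow> ('m \<Rightarrow> 'n) \<Rightarrow> bool" where
  "rmod_hom R M actM N actN f \<longleftrightarrow> f \<in> carrier M \<rightarrow> carrier N \<and>
     (\<forall>x\<in>carrier M. \<forall>y\<in>carrier M. f (x \<oplus>\<^bsub>M\<^esub> y) = f x \<oplus>\<^bsub>N\<^esub> f y) \<and>
     (\<forall>x\<in>carrier M. \<forall>r\<in>carrier R. f (actM x r) = actN (f x) r)"

definition fg_projective :: "'r ring \<Rightarrow> 'm ring \<Rightarrow> ('m \<Rightarrow> 'r \<Rightarrow> 'm) \<Rightarrow> bool" where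
  "fg_projective R M act \<longleftrightarrow> (\<exists>(n::nat) x f.
     (\<forall>i<n. x i \<in> carrier M \<and> rmod_hom R M act R (\<otimes>\<^bsub>R\<^esub>) (f i)) \<and>
     (\<forall>m\<in>carrier M. m = (\<Oplus>\<^bsub>M\<^esub> i\<in>{..<n}. act (x i) (f i m))))"

text \<open>Generator: R_R is an epimorphic image of a finite direct sum M^n.\<close>
definition generator :: "'r ring \<Rightarrow> 'm ring \<Rightarrow> ('m \<Rightarrow> 'r \<Rightarrow> 'm) \<Rightarrow> bool" where
  "generator R M act \<longleftrightarrow> (\<exists>(n::nat) f.
     (\<forall>i<n. rmod_hom R M act R (\<otimes>\<^bsub>R\<^esub>) (f i)) \<and>
     (\<forall>r\<in>carrier R. \<exists>m. (\<forall>i<n. m i \<in> carrier M) \<and> r = (\<Oplus>\<^bsub>R\<^esub> i\<in>{..<n}. f i (m i))))"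

definition progenerator :: "'r ring \<Rightarrow> 'm ring \<Rightarrow> ('m \<Rightarrow> 'r \<Rightarrow> 'm) \<Rightarrow> bool" where
  "progenerator R M act \<longleftrightarrow> right_module R M act \<and> fg_projective R M act \<and> generator R M act"

definition frobenius_hom :: "'a ring \<Rightarrow> 'a set \<Rightarrow> ('a \<Rightarrow> 'a) \<Rightarrow> bool" where
  "frobenius_hom A B E \<longleftrightarrow> E \<in> carrier A \<rightarrow> B \<and>
     (\<forall>a\<in>carrier A. \<forall>a'\<in>carrier A. E (a \<oplus>\<^bsub>A\<^esub> a') = E a \<oplus>\<^bsub>A\<^esub> E a') \<and>
     (\<forall>b\<in>B. \<forall>a\<in>carrier A. E (b \<otimes>\<^bsub>A\<^esub> a) = b \<otimes>\<^bsub>A\<^esub> E a) \<and>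
     (\<forall>b\<in>B. \<forall>a\<in>carrier A. E (a \<otimes>\<^bsub>A\<^esub> b) = E a \<otimes>\<^bsub>A\<^esub> b) \<and>
     (\<exists>(n::nat) x y. (\<forall>i<n. x i \<in> carrier A \<and> y i \<in> carrier A) \<and>
        (\<forall>a\<in>carrier A. (\<Oplus>\<^bsub>A\<^esub> i\<in>{..<n}. E (a \<otimes>\<^bsub>A\<^esub> x i) \<otimes>\<^bsub>A\<^esub> y i) = a \<and>
                        (\<Oplus>\<^bsub>A\<^esub> i\<in>{..<n}. x i \<otimes>\<^bsub>A\<^esub> E (y i \<otimes>\<^bsub>A\<^esub> a)) = a))"

definition frobenius_ext :: "'a ring \<Rightarrow> 'a set \<Rightarrow> bool" where
  "frobenius_ext A B \<longleftrightarrow> ring A \<and> subring B A \<and>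
     fg_projective (A\<lparr>carrier := B\<rparr>) A (\<otimes>\<^bsub>A\<^esub>) \<and>
     (\<exists>E. frobenius_hom A B E)"

definition end_ring :: "'r ring \<Rightarrow> 'm ring \<Rightarrow> ('m \<Rightarrow> 'r \<Rightarrow> 'm) \<Rightarrow> ('m \<Rightarrow> 'm) ring" where
  "end_ring R M act = \<lparr>carrier = {f. rmod_hom R M act M act f \<and> f \<in> extensional (carrier M)},
     monoid.mult = (\<lambda>f g. compose (carrier M) f g),
     monoid.one = (\<lambda>x\<in>carrier M. x),
     ring.zero = (\<lambda>x\<in>carrier M. \<zero>\<^bsub>M\<^esub>),
     ring.add = (\<lambda>f g. \<lambda>x\<in>carrier M. f x \<oplus>\<^bsub>M\<^esub> g x)\<rparr>"

end

theory Submission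
  imports Defs
begin



definition addhom :: "('a,'c) ring_scheme \<Rightarrow> ('b,'d) ring_scheme \<Rightarrow> ('a \<Rightarrow> 'b) \<Rightarrow> bool" where
 "addhom M N h \<longleftrightarrow> h \<in> carrier M \<rightarrow> carrier N \<and>
    (\<forall>a\<in>carrier M. \<forall>b\<in>carrier M. h (a \<oplus>\<^bsub>M\<^esub> b) = h a \<oplus>\<^bsub>N\<^esub> h b)"

lemma addhom_zero:
  assumes "abelian_group M" "abelian_group N" "addhom M N h"
  shows "h \<zero>\<^bsub>M\<^esub> = \<zero>\<^bsub>N\<^esub>"
proof -
  interpret M: abelian_group M by fact
  interpret N: abelian_group N by fact
  have c: "h \<zero>\<^bsub>M\<^esub> \<in> carrier N" using assms(3) unfolding addhom_def by auto
  have "h \<zero>\<^bsub>M\<^esub> \<oplus>\<^bsub>N\<^esub> h \<zero>\<^bsub>M\<^esub> = h \<zero>\<^bsub>M\<^esub> \<oplus>\<^bsub>N\<^esub> \<zero>\<^bsub>N\<^esub>"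
    using assms(3) c unfolding addhom_def by (metis M.l_zero M.zero_closed N.r_zero)
  then show ?thesis using c by (metis N.add.l_cancel N.zero_closed)
qed

lemma addhom_finsum:
  assumes "abelian_group M" "abelian_group N" "addhom M N h" "finite I" "f \<in> I \<rightarrow> carrier M"
  shows "h (finsum M f I) = (\<Oplus>\<^bsub>N\<^esub> i\<in>I. h (f i))"
  using assms(4,5)
proof (induction I rule: finite_induct)
  case empty
  then show ?case using addhom_zero[OF assms(1-3)]
    by (simp add: abelian_monoid.finsum_empty abelian_group.axioms(1) assms(1,2))
next
  case (insert i I)
  interpret M: abelian_group M by fact
  interpret N: abelian_group N by fact
  have hc: "\<And>a. a \<in> carrier M \<Longrightarrow> h a \<in> carrier N" using assms(3) unfolding addhom_def by auto
  have "finsum M f (insert i I) = f i \<oplus>\<^bsub>M\<^esub> finsum M f I"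
    using insert by (simp add: M.finsum_insert)
  then have "h (finsum M f (insert i I)) = h (f i) \<oplus>\<^bsub>N\<^esub> h (finsum M f I)"
    using assms(3) insert unfolding addhom_def by (auto intro: M.finsum_closed)
  also have "\<dots> = (\<Oplus>\<^bsub>N\<^esub> i\<in>insert i I. h (f i))"
    using insert hc by (subst N.finsum_insert) auto
  finally show ?case .
qed

lemma addhom_comp:
  "addhom M N h \<Longrightarrow> addhom N K h' \<Longrightarrow> addhom M K (\<lambda>z. h' (h z))"
  unfolding addhom_def by (auto simp: Pi_def)

lemma (in abelian_monoid) finsum_swap:
  assumes "finite I" "finite J" "\<And>i j. i \<in> I \<Longrightarrow> j \<in> J \<Longrightarrow> f i j \<in> carrier G"
  shows "(\<Oplus>i\<in>I. \<Oplus>j\<in>J. f i j) = (\<Oplus>j\<in>J. \<Oplus>i\<in>I. f i j)"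
  using assms(1,3)
proof (induction I rule: finite_induct)
  case empty
  then show ?case by (simp add: finsum_zero)
next
  case (insert a I)
  have "(\<Oplus>i\<in>insert a I. \<Oplus>j\<in>J. f i j) = (\<Oplus>j\<in>J. f a j) \<oplus> (\<Oplus>i\<in>I. \<Oplus>j\<in>J. f i j)"
    using insert assms(2) by (subst finsum_insert) (auto intro!: finsum_closed)
  also have "\<dots> = (\<Oplus>j\<in>J. f a j) \<oplus> (\<Oplus>j\<in>J. \<Oplus>i\<in>I. f i j)" using insert by simp
  also have "\<dots> = (\<Oplus>j\<in>J. f a j \<oplus> (\<Oplus>i\<in>I. f i j))"
    using insert assms(2) by (subst finsum_addf) (auto intro!: finsum_closed)
  also have "\<dots> = (\<Oplus>j\<in>J. \<Oplus>i\<in>insert a I. f i j)"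
    using insert assms(2) by (intro finsum_cong') (auto intro!: finsum_closed simp: finsum_insert)
  finally show ?case .
qed

lemma (in abelian_monoid) finsum_prod:
  assumes "finite I" "finite J" "\<And>i j. i \<in> I \<Longrightarrow> j \<in> J \<Longrightarrow> f (i, j) \<in> carrier G"
  shows "finsum G f (I \<times> J) = (\<Oplus>i\<in>I. \<Oplus>j\<in>J. f (i, j))"
  using assms(1,3)
proof (induction I rule: finite_induct)
  case empty
  then show ?case by simp
next
  case (insert a I)
  have d: "insert a I \<times> J = (Pair a ` J) \<union> (I \<times> J)" by auto
  have "finsum G f (insert a I \<times> J) = finsum G f (Pair a ` J) \<oplus> finsum G f (I \<times> J)"
    unfolding d using insert assms(2) by (intro finsum_Un_disjoint) auto
  also have "finsum G f (Pair a ` J) = (\<Oplus>j\<in>J. f (a, j))"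
    using insert by (subst finsum_reindex) (auto simp: inj_on_def comp_def)
  finally show ?case using insert assms(2)
    by (subst finsum_insert) (auto intro!: finsum_closed)
qed





lemma rm_neg:
  assumes "right_module R M act" "m \<in> carrier M" "r \<in> carrier R"
  shows "act (\<ominus>\<^bsub>M\<^esub> m) r = \<ominus>\<^bsub>M\<^esub> act m r"
proof -
  interpret M: abelian_group M using assms(1) unfolding right_module_def by auto
  have ah: "addhom M M (\<lambda>z. act z r)" using assms unfolding right_module_def addhom_def by auto
  have z: "act \<zero>\<^bsub>M\<^esub> r = \<zero>\<^bsub>M\<^esub>" using addhom_zero[OF M.abelian_group_axioms M.abelian_group_axioms ah] by simp
  have c: "act (\<ominus>\<^bsub>M\<^esub> m) r \<in> carrier M" "act m r \<in> carrier M" using assms unfolding right_module_def by auto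
  have "act (\<ominus>\<^bsub>M\<^esub> m) r \<oplus>\<^bsub>M\<^esub> act m r = \<zero>\<^bsub>M\<^esub>"
    using ah assms(2) z unfolding addhom_def by (metis M.a_inv_closed M.l_neg)
  then show ?thesis using c by (metis M.minus_equality)
qed

lemma end_ring_ring:
  assumes rm: "right_module R M act"
  shows "ring (end_ring R M act)"
proof -
  interpret M: abelian_group M using rm unfolding right_module_def by auto
  have actc: "\<And>m r. m \<in> carrier M \<Longrightarrow> r \<in> carrier R \<Longrightarrow> act m r \<in> carrier M"
    and actd: "\<And>m n r. m \<in> carrier M \<Longrightarrow> n \<in> carrier M \<Longrightarrow> r \<in> carrier R \<Longrightarrow> act (m \<oplus>\<^bsub>M\<^esub> n) r = act m r \<oplus>\<^bsub>M\<^esub> act n r"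
    using rm unfolding right_module_def by auto
  have z: "\<And>r. r \<in> carrier R \<Longrightarrow> act \<zero>\<^bsub>M\<^esub> r = \<zero>\<^bsub>M\<^esub>"
  proof -
    fix r assume r: "r \<in> carrier R"
    have ah: "addhom M M (\<lambda>z. act z r)" using actc actd r unfolding addhom_def by auto
    show "act \<zero>\<^bsub>M\<^esub> r = \<zero>\<^bsub>M\<^esub>" using addhom_zero[OF M.abelian_group_axioms M.abelian_group_axioms ah] by simp
  qed
  note defs = end_ring_def rmod_hom_def
  show ?thesis
  proof (rule ringI)
    show "abelian_group (end_ring R M act)"
    proof (rule abelian_groupI)
      fix f g assume "f \<in> carrier (end_ring R M act)" "g \<in> carrier (end_ring R M act)"
      then show "f \<oplus>\<^bsub>end_ring R M act\<^esub> g \<in> carrier (end_ring R M act)"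
        by (auto simp: defs actd M.a_ac Pi_def actc)
    next
      show "\<zero>\<^bsub>end_ring R M act\<^esub> \<in> carrier (end_ring R M act)"
        by (auto simp: defs z actc)
    next
      fix f g h assume "f \<in> carrier (end_ring R M act)" "g \<in> carrier (end_ring R M act)" "h \<in> carrier (end_ring R M act)"
      then show "f \<oplus>\<^bsub>end_ring R M act\<^esub> g \<oplus>\<^bsub>end_ring R M act\<^esub> h = f \<oplus>\<^bsub>end_ring R M act\<^esub> (g \<oplus>\<^bsub>end_ring R M act\<^esub> h)"
        by (auto simp: defs M.a_assoc Pi_def)
    next
      fix f g assume "f \<in> carrier (end_ring R M act)" "g \<in> carrier (end_ring R M act)"
      then show "f \<oplus>\<^bsub>end_ring R M act\<^esub> g = g \<oplus>\<^bsub>end_ring R M act\<^esub> f"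
        by (auto simp: defs M.a_comm Pi_def)
    next
      fix f assume "f \<in> carrier (end_ring R M act)"
      then show "\<zero>\<^bsub>end_ring R M act\<^esub> \<oplus>\<^bsub>end_ring R M act\<^esub> f = f"
        by (auto simp: defs Pi_def extensional_def)
    next
      fix f assume f: "f \<in> carrier (end_ring R M act)"
      let ?g = "\<lambda>x\<in>carrier M. \<ominus>\<^bsub>M\<^esub> f x"
      have fc: "\<And>x. x \<in> carrier M \<Longrightarrow> f x \<in> carrier M" using f by (auto simp: defs)
      have "?g \<in> carrier (end_ring R M act)"
        using f by (auto simp: defs Pi_def M.minus_add rm_neg[OF rm] actc)
      moreover have "?g \<oplus>\<^bsub>end_ring R M act\<^esub> f = \<zero>\<^bsub>end_ring R M act\<^esub>"
        using fc by (auto simp: defs M.l_neg intro!: restrict_ext)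
      ultimately show "\<exists>g\<in>carrier (end_ring R M act). g \<oplus>\<^bsub>end_ring R M act\<^esub> f = \<zero>\<^bsub>end_ring R M act\<^esub>" by blast
    qed
  next
    show "monoid (end_ring R M act)"
    proof (rule monoidI)
      fix f g assume "f \<in> carrier (end_ring R M act)" "g \<in> carrier (end_ring R M act)"
      then show "f \<otimes>\<^bsub>end_ring R M act\<^esub> g \<in> carrier (end_ring R M act)"
        by (auto simp: defs compose_def Pi_def actc)
    next
      show "\<one>\<^bsub>end_ring R M act\<^esub> \<in> carrier (end_ring R M act)"
        by (auto simp: defs actc)
    next
      fix f g h assume "f \<in> carrier (end_ring R M act)" "g \<in> carrier (end_ring R M act)" "h \<in> carrier (end_ring R M act)"
      then show "f \<otimes>\<^bsub>end_ring R M act\<^esub> g \<otimes>\<^bsub>end_ring R M act\<^esub> h = f \<otimes>\<^bsub>end_ring R M act\<^esub> (g \<otimes>\<^bsub>end_ring R M act\<^esub> h)"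
        by (auto simp: defs compose_def Pi_def actc)
    next
      fix f assume "f \<in> carrier (end_ring R M act)"
      then show "\<one>\<^bsub>end_ring R M act\<^esub> \<otimes>\<^bsub>end_ring R M act\<^esub> f = f"
        by (auto simp: defs compose_def Pi_def extensional_def)
    next
      fix f assume "f \<in> carrier (end_ring R M act)"
      then show "f \<otimes>\<^bsub>end_ring R M act\<^esub> \<one>\<^bsub>end_ring R M act\<^esub> = f"
        by (auto simp: defs compose_def Pi_def extensional_def)
    qed
  next
    fix f g h assume "f \<in> carrier (end_ring R M act)" "g \<in> carrier (end_ring R M act)" "h \<in> carrier (end_ring R M act)"
    then show "(f \<oplus>\<^bsub>end_ring R M act\<^esub> g) \<otimes>\<^bsub>end_ring R M act\<^esub> h = f \<otimes>\<^bsub>end_ring R M act\<^esub> h \<oplus>\<^bsub>end_ring R M act\<^esub> g \<otimes>\<^bsub>end_ring R M act\<^esub> h"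
      by (auto simp: defs compose_def Pi_def actc)
  next
    fix f g h assume "f \<in> carrier (end_ring R M act)" "g \<in> carrier (end_ring R M act)" "h \<in> carrier (end_ring R M act)"
    then show "h \<otimes>\<^bsub>end_ring R M act\<^esub> (f \<oplus>\<^bsub>end_ring R M act\<^esub> g) = h \<otimes>\<^bsub>end_ring R M act\<^esub> f \<oplus>\<^bsub>end_ring R M act\<^esub> h \<otimes>\<^bsub>end_ring R M act\<^esub> g"
      by (auto simp: defs compose_def Pi_def actc)
  qed
qed





lemma frob_fgp:
  assumes R: "ring R" and sB: "subring B R" and F: "frobenius_hom R B E"
  shows "fg_projective (R\<lparr>carrier := B\<rparr>) R (\<otimes>\<^bsub>R\<^esub>)"
proof -
  interpret R: ring R by fact
  have Bc: "B \<subseteq> carrier R" using subringE(1)[OF sB] .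
  obtain n :: nat and x y where xy: "\<forall>i<n. x i \<in> carrier R \<and> y i \<in> carrier R"
    and id: "\<forall>a\<in>carrier R. (\<Oplus>\<^bsub>R\<^esub> i\<in>{..<n}. E (a \<otimes>\<^bsub>R\<^esub> x i) \<otimes>\<^bsub>R\<^esub> y i) = a \<and>
                        (\<Oplus>\<^bsub>R\<^esub> i\<in>{..<n}. x i \<otimes>\<^bsub>R\<^esub> E (y i \<otimes>\<^bsub>R\<^esub> a)) = a"
    using F unfolding frobenius_hom_def by blast
  have EB: "E \<in> carrier R \<rightarrow> B" and Ead: "\<forall>a\<in>carrier R. \<forall>a'\<in>carrier R. E (a \<oplus>\<^bsub>R\<^esub> a') = E a \<oplus>\<^bsub>R\<^esub> E a'"
    and Er: "\<forall>b\<in>B. \<forall>a\<in>carrier R. E (a \<otimes>\<^bsub>R\<^esub> b) = E a \<otimes>\<^bsub>R\<^esub> b"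
    using F unfolding frobenius_hom_def by auto
  show ?thesis unfolding fg_projective_def
  proof (intro exI conjI allI impI ballI)
    fix i assume i: "i < n"
    show "x i \<in> carrier R" using xy i by auto
    show "rmod_hom (R\<lparr>carrier := B\<rparr>) R (\<otimes>\<^bsub>R\<^esub>) (R\<lparr>carrier := B\<rparr>) (\<otimes>\<^bsub>R\<lparr>carrier := B\<rparr>\<^esub>) (\<lambda>a. E (y i \<otimes>\<^bsub>R\<^esub> a))"
      unfolding rmod_hom_def using xy i EB Bc
      by (auto simp: R.r_distr Ead R.m_assoc[symmetric] Er)
  next
    fix m assume "m \<in> carrier R"
    then show "m = (\<Oplus>\<^bsub>R\<^esub> i\<in>{..<n}. x i \<otimes>\<^bsub>R\<^esub> E (y i \<otimes>\<^bsub>R\<^esub> m))" using id by auto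
  qed
qed

lemma frob_reindex:
  assumes R: "ring R" and fin: "finite I" and Xs: "Xs \<in> I \<rightarrow> carrier R" and Ys: "Ys \<in> I \<rightarrow> carrier R"
    and Ec: "E \<in> carrier R \<rightarrow> carrier R"
    and id: "\<forall>a\<in>carrier R. (\<Oplus>\<^bsub>R\<^esub> i\<in>I. E (a \<otimes>\<^bsub>R\<^esub> Xs i) \<otimes>\<^bsub>R\<^esub> Ys i) = a \<and>
                        (\<Oplus>\<^bsub>R\<^esub> i\<in>I. Xs i \<otimes>\<^bsub>R\<^esub> E (Ys i \<otimes>\<^bsub>R\<^esub> a)) = a"
  shows "\<exists>(n::nat) x y. (\<forall>i<n. x i \<in> carrier R \<and> y i \<in> carrier R) \<and>
        (\<forall>a\<in>carrier R. (\<Oplus>\<^bsub>R\<^esub> i\<in>{..<n}. E (a \<otimes>\<^bsub>R\<^esub> x i) \<otimes>\<^bsub>R\<^esub> y i) = a \<and>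
                        (\<Oplus>\<^bsub>R\<^esub> i\<in>{..<n}. x i \<otimes>\<^bsub>R\<^esub> E (y i \<otimes>\<^bsub>R\<^esub> a)) = a)"
proof -
  interpret R: ring R by fact
  obtain h where h: "bij_betw h {0..<card I} I" using ex_bij_betw_nat_finite[OF fin] by blast
  have hI: "h ` {..<card I} = I" and inj: "inj_on h {..<card I}"
    using h unfolding bij_betw_def by (auto simp: atLeast0LessThan)
  show ?thesis
  proof (intro exI conjI allI impI ballI)
    fix i assume "i < card I"
    then have "h i \<in> I" using hI by auto
    then show "(Xs \<circ> h) i \<in> carrier R" "(Ys \<circ> h) i \<in> carrier R" using Xs Ys by auto
  next
    fix a assume a: "a \<in> carrier R"
    have "(\<Oplus>\<^bsub>R\<^esub> i\<in>{..<card I}. E (a \<otimes>\<^bsub>R\<^esub> (Xs \<circ> h) i) \<otimes>\<^bsub>R\<^esub> (Ys \<circ> h) i)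
        = (\<Oplus>\<^bsub>R\<^esub> i\<in>h ` {..<card I}. E (a \<otimes>\<^bsub>R\<^esub> Xs i) \<otimes>\<^bsub>R\<^esub> Ys i)"
      using inj Xs Ys Ec a hI by (subst R.finsum_reindex) (auto simp: comp_def Pi_def)
    then show "(\<Oplus>\<^bsub>R\<^esub> i\<in>{..<card I}. E (a \<otimes>\<^bsub>R\<^esub> (Xs \<circ> h) i) \<otimes>\<^bsub>R\<^esub> (Ys \<circ> h) i) = a"
      using id a hI by simp
    have "(\<Oplus>\<^bsub>R\<^esub> i\<in>{..<card I}. (Xs \<circ> h) i \<otimes>\<^bsub>R\<^esub> E ((Ys \<circ> h) i \<otimes>\<^bsub>R\<^esub> a))
        = (\<Oplus>\<^bsub>R\<^esub> i\<in>h ` {..<card I}. Xs i \<otimes>\<^bsub>R\<^esub> E (Ys i \<otimes>\<^bsub>R\<^esub> a))"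
      using inj Xs Ys Ec a hI by (subst R.finsum_reindex) (auto simp: comp_def Pi_def)
    then show "(\<Oplus>\<^bsub>R\<^esub> i\<in>{..<card I}. (Xs \<circ> h) i \<otimes>\<^bsub>R\<^esub> E ((Ys \<circ> h) i \<otimes>\<^bsub>R\<^esub> a)) = a"
      using id a hI by simp
  qed
qed





locale fsetup =
  fixes A :: "'a ring" and B :: "'a set" and E :: "'a \<Rightarrow> 'a"
    and P :: "'p ring" and act :: "'p \<Rightarrow> 'a \<Rightarrow> 'p"
    and n :: nat and x :: "nat \<Rightarrow> 'a" and y :: "nat \<Rightarrow> 'a"
    and m :: nat and pp :: "nat \<Rightarrow> 'p" and phi :: "nat \<Rightarrow> 'p \<Rightarrow> 'a"
    and g :: nat and psi :: "nat \<Rightarrow> 'p \<Rightarrow> 'a" and qq :: "nat \<Rightarrow> 'p"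
  assumes A: "ring A" and sB: "subring B A"
    and EB: "E \<in> carrier A \<rightarrow> B"
    and Ead: "\<forall>a\<in>carrier A. \<forall>a'\<in>carrier A. E (a \<oplus>\<^bsub>A\<^esub> a') = E a \<oplus>\<^bsub>A\<^esub> E a'"
    and El: "\<forall>b\<in>B. \<forall>a\<in>carrier A. E (b \<otimes>\<^bsub>A\<^esub> a) = b \<otimes>\<^bsub>A\<^esub> E a"
    and Er: "\<forall>b\<in>B. \<forall>a\<in>carrier A. E (a \<otimes>\<^bsub>A\<^esub> b) = E a \<otimes>\<^bsub>A\<^esub> b"
    and xy: "\<forall>i<n. x i \<in> carrier A \<and> y i \<in> carrier A"
    and id1: "\<forall>a\<in>carrier A. (\<Oplus>\<^bsub>A\<^esub> i\<in>{..<n}. E (a \<otimes>\<^bsub>A\<^esub> x i) \<otimes>\<^bsub>A\<^esub> y i) = a"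
    and id2: "\<forall>a\<in>carrier A. (\<Oplus>\<^bsub>A\<^esub> i\<in>{..<n}. x i \<otimes>\<^bsub>A\<^esub> E (y i \<otimes>\<^bsub>A\<^esub> a)) = a"
    and rm: "right_module A P act"
    and ppa: "\<forall>j<m. pp j \<in> carrier P \<and> rmod_hom A P act A (\<otimes>\<^bsub>A\<^esub>) (phi j)"
    and pdec: "\<forall>p\<in>carrier P. p = (\<Oplus>\<^bsub>P\<^esub> j\<in>{..<m}. act (pp j) (phi j p))"
    and gen: "\<forall>k<g. rmod_hom A P act A (\<otimes>\<^bsub>A\<^esub>) (psi k) \<and> qq k \<in> carrier P"
    and gsum: "(\<Oplus>\<^bsub>A\<^esub> k\<in>{..<g}. psi k (qq k)) = \<one>\<^bsub>A\<^esub>"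
begin

abbreviation "S \<equiv> end_ring (A\<lparr>carrier := B\<rparr>) P act"
abbreviation "T \<equiv> end_ring A P act"

sublocale A: ring A by (rule A)
sublocale P: abelian_group P using rm unfolding right_module_def by auto

lemma agA: "abelian_group A" by (simp add: A.abelian_group_axioms)
lemma agP: "abelian_group P" by (simp add: P.abelian_group_axioms)

lemma Bc: "B \<subseteq> carrier A" using subringE(1)[OF sB] .
lemma Bcc[simp]: "b \<in> B \<Longrightarrow> b \<in> carrier A" using Bc by auto
lemma EBc[simp]: "a \<in> carrier A \<Longrightarrow> E a \<in> B" using EB by auto
lemma Ec[simp]: "a \<in> carrier A \<Longrightarrow> E a \<in> carrier A" using EB Bc by auto
lemma xc[simp]: "i < n \<Longrightarrow> x i \<in> carrier A" and yc[simp]: "i < n \<Longrightarrow> y i \<in> carrier A"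
  using xy by auto
lemma ppc[simp]: "j < m \<Longrightarrow> pp j \<in> carrier P" using ppa by auto
lemma qqc[simp]: "k < g \<Longrightarrow> qq k \<in> carrier P" using gen by auto
lemma phic[simp]: "j < m \<Longrightarrow> p \<in> carrier P \<Longrightarrow> phi j p \<in> carrier A"
  using ppa unfolding rmod_hom_def by auto
lemma psic[simp]: "k < g \<Longrightarrow> p \<in> carrier P \<Longrightarrow> psi k p \<in> carrier A"
  using gen unfolding rmod_hom_def by auto
lemma actc[simp]: "p \<in> carrier P \<Longrightarrow> a \<in> carrier A \<Longrightarrow> act p a \<in> carrier P"
  using rm unfolding right_module_def by auto
lemma act_ad1: "p \<in> carrier P \<Longrightarrow> q \<in> carrier P \<Longrightarrow> a \<in> carrier A \<Longrightarrow> act (p \<oplus>\<^bsub>P\<^esub> q) a = act p a \<oplus>\<^bsub>P\<^esub> act q a"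
  using rm unfolding right_module_def by auto
lemma act_ad2: "p \<in> carrier P \<Longrightarrow> a \<in> carrier A \<Longrightarrow> b \<in> carrier A \<Longrightarrow> act p (a \<oplus>\<^bsub>A\<^esub> b) = act p a \<oplus>\<^bsub>P\<^esub> act p b"
  using rm unfolding right_module_def by auto
lemma act_as: "p \<in> carrier P \<Longrightarrow> a \<in> carrier A \<Longrightarrow> b \<in> carrier A \<Longrightarrow> act (act p a) b = act p (a \<otimes>\<^bsub>A\<^esub> b)"
  using rm unfolding right_module_def by auto
lemma act_one[simp]: "p \<in> carrier P \<Longrightarrow> act p \<one>\<^bsub>A\<^esub> = p"
  using rm unfolding right_module_def by auto
lemma phi_ad: "j < m \<Longrightarrow> p \<in> carrier P \<Longrightarrow> q \<in> carrier P \<Longrightarrow> phi j (p \<oplus>\<^bsub>P\<^esub> q) = phi j p \<oplus>\<^bsub>A\<^esub> phi j q"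
  using ppa unfolding rmod_hom_def by auto
lemma phi_lin: "j < m \<Longrightarrow> p \<in> carrier P \<Longrightarrow> a \<in> carrier A \<Longrightarrow> phi j (act p a) = phi j p \<otimes>\<^bsub>A\<^esub> a"
  using ppa unfolding rmod_hom_def by auto
lemma psi_ad: "k < g \<Longrightarrow> p \<in> carrier P \<Longrightarrow> q \<in> carrier P \<Longrightarrow> psi k (p \<oplus>\<^bsub>P\<^esub> q) = psi k p \<oplus>\<^bsub>A\<^esub> psi k q"
  using gen unfolding rmod_hom_def by auto
lemma psi_lin: "k < g \<Longrightarrow> p \<in> carrier P \<Longrightarrow> a \<in> carrier A \<Longrightarrow> psi k (act p a) = psi k p \<otimes>\<^bsub>A\<^esub> a"
  using gen unfolding rmod_hom_def by auto

lemma rmB: "right_module (A\<lparr>carrier := B\<rparr>) P act"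
  using rm A.subring_is_ring[OF sB] Bc unfolding right_module_def by (auto simp: subset_eq)

lemma S_carrier: "s \<in> carrier S \<longleftrightarrow> s \<in> carrier P \<rightarrow> carrier P \<and>
   (\<forall>p\<in>carrier P. \<forall>q\<in>carrier P. s (p \<oplus>\<^bsub>P\<^esub> q) = s p \<oplus>\<^bsub>P\<^esub> s q) \<and>
   (\<forall>p\<in>carrier P. \<forall>b\<in>B. s (act p b) = act (s p) b) \<and> s \<in> extensional (carrier P)"
  by (simp add: end_ring_def rmod_hom_def)

lemma T_carrier: "t \<in> carrier T \<longleftrightarrow> t \<in> carrier P \<rightarrow> carrier P \<and>
   (\<forall>p\<in>carrier P. \<forall>q\<in>carrier P. t (p \<oplus>\<^bsub>P\<^esub> q) = t p \<oplus>\<^bsub>P\<^esub> t q) \<and>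
   (\<forall>p\<in>carrier P. \<forall>a\<in>carrier A. t (act p a) = act (t p) a) \<and> t \<in> extensional (carrier P)"
  by (simp add: end_ring_def rmod_hom_def)

lemma TS: "carrier T \<subseteq> carrier S"
proof
  fix t assume "t \<in> carrier T" then show "t \<in> carrier S" unfolding T_carrier S_carrier by auto
qed

lemma Sc[simp]: "s \<in> carrier S \<Longrightarrow> p \<in> carrier P \<Longrightarrow> s p \<in> carrier P"
  unfolding S_carrier by auto
lemma S_ad: "s \<in> carrier S \<Longrightarrow> p \<in> carrier P \<Longrightarrow> q \<in> carrier P \<Longrightarrow> s (p \<oplus>\<^bsub>P\<^esub> q) = s p \<oplus>\<^bsub>P\<^esub> s q"
  unfolding S_carrier by auto
lemma S_lin: "s \<in> carrier S \<Longrightarrow> p \<in> carrier P \<Longrightarrow> b \<in> B \<Longrightarrow> s (act p b) = act (s p) b"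
  unfolding S_carrier by auto
lemma T_lin: "t \<in> carrier T \<Longrightarrow> p \<in> carrier P \<Longrightarrow> a \<in> carrier A \<Longrightarrow> t (act p a) = act (t p) a"
  unfolding T_carrier by auto

lemma ringS: "ring S" by (rule end_ring_ring[OF rmB])
lemma ringT: "ring T" by (rule end_ring_ring[OF rm])

lemma S_mult: "p \<in> carrier P \<Longrightarrow> (s \<otimes>\<^bsub>S\<^esub> t) p = s (t p)"
  by (simp add: end_ring_def compose_def)
lemma S_add: "p \<in> carrier P \<Longrightarrow> (s \<oplus>\<^bsub>S\<^esub> t) p = s p \<oplus>\<^bsub>P\<^esub> t p"
  by (simp add: end_ring_def)
lemma S_ops: "monoid.mult S = monoid.mult T" "ring.add S = ring.add T" "monoid.one S = monoid.one T" "ring.zero S = ring.zero T"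
  by (simp_all add: end_ring_def)

lemma S_finsum:
  assumes "finite K" "f \<in> K \<rightarrow> carrier S" "p \<in> carrier P"
  shows "finsum S f K p = (\<Oplus>\<^bsub>P\<^esub> k\<in>K. f k p)"
  using assms(1,2)
proof (induction K rule: finite_induct)
  case empty
  interpret S: ring S by (rule ringS)
  show ?case using assms(3) by (simp add: S.finsum_empty) (simp add: end_ring_def)
next
  case (insert k K)
  interpret S: ring S by (rule ringS)
  have "finsum S f (insert k K) = f k \<oplus>\<^bsub>S\<^esub> finsum S f K" using insert by (simp add: S.finsum_insert)
  then have "finsum S f (insert k K) p = f k p \<oplus>\<^bsub>P\<^esub> finsum S f K p" by (simp add: S_add assms(3))
  then show ?case using insert assms(3) by (simp add: P.finsum_insert Pi_def)
qed

lemma S_eqI: "s \<in> carrier S \<Longrightarrow> t \<in> carrier S \<Longrightarrow> (\<And>p. p \<in> carrier P \<Longrightarrow> s p = t p) \<Longrightarrow> s = t"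
  unfolding S_carrier by (auto intro: extensionalityI)

lemma ah_act1: "a \<in> carrier A \<Longrightarrow> addhom P P (\<lambda>z. act z a)"
  unfolding addhom_def by (auto simp: act_ad1)
lemma ah_act2: "p \<in> carrier P \<Longrightarrow> addhom A P (\<lambda>z. act p z)"
  unfolding addhom_def by (auto simp: act_ad2)
lemma ah_S: "s \<in> carrier S \<Longrightarrow> addhom P P s"
  unfolding addhom_def by (auto simp: S_ad)
lemma ah_phi: "j < m \<Longrightarrow> addhom P A (phi j)"
  unfolding addhom_def by (auto simp: phi_ad)
lemma ah_psi: "k < g \<Longrightarrow> addhom P A (psi k)"
  unfolding addhom_def by (auto simp: psi_ad)
lemma ah_E: "addhom A A E"
  unfolding addhom_def using Ead by auto
lemma ah_lm: "a \<in> carrier A \<Longrightarrow> addhom A A (\<lambda>z. a \<otimes>\<^bsub>A\<^esub> z)"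
  unfolding addhom_def by (auto simp: A.r_distr)
lemma ah_rm: "a \<in> carrier A \<Longrightarrow> addhom A A (\<lambda>z. z \<otimes>\<^bsub>A\<^esub> a)"
  unfolding addhom_def by (auto simp: A.l_distr)

lemmas sum_PP = addhom_finsum[OF agP agP]
lemmas sum_AP = addhom_finsum[OF agA agP]
lemmas sum_AA = addhom_finsum[OF agA agA]
lemmas sum_PA = addhom_finsum[OF agP agA]

end




context fsetup begin

definition F :: "('p \<Rightarrow> 'p) \<Rightarrow> ('p \<Rightarrow> 'p)" where
  "F s = (\<lambda>p\<in>carrier P. \<Oplus>\<^bsub>P\<^esub> l\<in>{..<n}. act (s (act p (x l))) (y l))"

lemma F_ap: "p \<in> carrier P \<Longrightarrow> F s p = (\<Oplus>\<^bsub>P\<^esub> l\<in>{..<n}. act (s (act p (x l))) (y l))"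
  by (simp add: F_def)

lemma F_c: "s \<in> carrier S \<Longrightarrow> p \<in> carrier P \<Longrightarrow> F s p \<in> carrier P"
  by (auto simp: F_ap intro!: P.finsum_closed)

lemma F_lin:
  assumes s: "s \<in> carrier S" and p: "p \<in> carrier P" and a: "a \<in> carrier A"
  shows "F s (act p a) = act (F s p) a"
proof -
  define w where "w i = s (act p (x i))" for i
  have wc: "i < n \<Longrightarrow> w i \<in> carrier P" for i using s p by (simp add: w_def)
  have step1: "act (act p a) (x l) = (\<Oplus>\<^bsub>P\<^esub> i\<in>{..<n}. act (act p (x i)) (E (y i \<otimes>\<^bsub>A\<^esub> (a \<otimes>\<^bsub>A\<^esub> x l))))"
    if l: "l < n" for l
  proof -
    have "act (act p a) (x l) = act p (a \<otimes>\<^bsub>A\<^esub> x l)" using p a l by (simp add: act_as)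
    also have "\<dots> = act p (\<Oplus>\<^bsub>A\<^esub> i\<in>{..<n}. x i \<otimes>\<^bsub>A\<^esub> E (y i \<otimes>\<^bsub>A\<^esub> (a \<otimes>\<^bsub>A\<^esub> x l)))"
      using id2 a l by simp
    also have "\<dots> = (\<Oplus>\<^bsub>P\<^esub> i\<in>{..<n}. act p (x i \<otimes>\<^bsub>A\<^esub> E (y i \<otimes>\<^bsub>A\<^esub> (a \<otimes>\<^bsub>A\<^esub> x l))))"
      using a l p by (subst sum_AP[OF ah_act2]) (auto simp: Pi_def)
    also have "\<dots> = (\<Oplus>\<^bsub>P\<^esub> i\<in>{..<n}. act (act p (x i)) (E (y i \<otimes>\<^bsub>A\<^esub> (a \<otimes>\<^bsub>A\<^esub> x l))))"
      using a l p by (intro P.finsum_cong') (auto simp: act_as)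
    finally show ?thesis .
  qed
  have step2: "act (s (act (act p a) (x l))) (y l) = (\<Oplus>\<^bsub>P\<^esub> i\<in>{..<n}. act (w i) (E (y i \<otimes>\<^bsub>A\<^esub> (a \<otimes>\<^bsub>A\<^esub> x l)) \<otimes>\<^bsub>A\<^esub> y l))"
    if l: "l < n" for l
  proof -
    have "s (act (act p a) (x l)) = (\<Oplus>\<^bsub>P\<^esub> i\<in>{..<n}. s (act (act p (x i)) (E (y i \<otimes>\<^bsub>A\<^esub> (a \<otimes>\<^bsub>A\<^esub> x l)))))"
      using step1[OF l] a l p s by (simp add: sum_PP[OF ah_S] Pi_def)
    also have "\<dots> = (\<Oplus>\<^bsub>P\<^esub> i\<in>{..<n}. act (w i) (E (y i \<otimes>\<^bsub>A\<^esub> (a \<otimes>\<^bsub>A\<^esub> x l))))"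
      using a l p s by (intro P.finsum_cong') (auto simp: S_lin w_def)
    finally have "act (s (act (act p a) (x l))) (y l) = act (\<Oplus>\<^bsub>P\<^esub> i\<in>{..<n}. act (w i) (E (y i \<otimes>\<^bsub>A\<^esub> (a \<otimes>\<^bsub>A\<^esub> x l)))) (y l)"
      by simp
    also have "\<dots> = (\<Oplus>\<^bsub>P\<^esub> i\<in>{..<n}. act (act (w i) (E (y i \<otimes>\<^bsub>A\<^esub> (a \<otimes>\<^bsub>A\<^esub> x l)))) (y l))"
      using a l wc by (subst sum_PP[OF ah_act1]) (auto simp: Pi_def)
    also have "\<dots> = (\<Oplus>\<^bsub>P\<^esub> i\<in>{..<n}. act (w i) (E (y i \<otimes>\<^bsub>A\<^esub> (a \<otimes>\<^bsub>A\<^esub> x l)) \<otimes>\<^bsub>A\<^esub> y l))"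
      using a l wc by (intro P.finsum_cong') (auto simp: act_as)
    finally show ?thesis .
  qed
  have "F s (act p a) = (\<Oplus>\<^bsub>P\<^esub> l\<in>{..<n}. \<Oplus>\<^bsub>P\<^esub> i\<in>{..<n}. act (w i) (E (y i \<otimes>\<^bsub>A\<^esub> (a \<otimes>\<^bsub>A\<^esub> x l)) \<otimes>\<^bsub>A\<^esub> y l))"
    unfolding F_ap[OF actc[OF p a]] by (rule P.finsum_cong'[OF refl]) (use step2 wc a in \<open>auto intro!: P.finsum_closed\<close>)
  also have "\<dots> = (\<Oplus>\<^bsub>P\<^esub> i\<in>{..<n}. \<Oplus>\<^bsub>P\<^esub> l\<in>{..<n}. act (w i) (E (y i \<otimes>\<^bsub>A\<^esub> (a \<otimes>\<^bsub>A\<^esub> x l)) \<otimes>\<^bsub>A\<^esub> y l))"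
    using a wc by (intro P.finsum_swap) auto
  also have "\<dots> = (\<Oplus>\<^bsub>P\<^esub> i\<in>{..<n}. act (w i) (\<Oplus>\<^bsub>A\<^esub> l\<in>{..<n}. E ((y i \<otimes>\<^bsub>A\<^esub> a) \<otimes>\<^bsub>A\<^esub> x l) \<otimes>\<^bsub>A\<^esub> y l))"
    using a wc by (intro P.finsum_cong') (auto simp: sum_AP[OF ah_act2] Pi_def A.m_assoc intro!: P.finsum_cong')
  also have "\<dots> = (\<Oplus>\<^bsub>P\<^esub> i\<in>{..<n}. act (act (w i) (y i)) a)"
    using a wc id1 by (intro P.finsum_cong') (auto simp: act_as)
  also have "\<dots> = act (\<Oplus>\<^bsub>P\<^esub> i\<in>{..<n}. act (w i) (y i)) a"
    using a wc by (subst sum_PP[OF ah_act1]) (auto simp: Pi_def)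
  also have "\<dots> = act (F s p) a" using p by (simp add: F_ap w_def)
  finally show ?thesis .
qed

lemma F_T: assumes s: "s \<in> carrier S" shows "F s \<in> carrier T"
  unfolding T_carrier
proof (intro conjI ballI)
  show "F s \<in> carrier P \<rightarrow> carrier P" using F_c[OF s] by auto
  show "F s \<in> extensional (carrier P)" by (simp add: F_def)
  fix p q assume p: "p \<in> carrier P" and q: "q \<in> carrier P"
  have "F s (p \<oplus>\<^bsub>P\<^esub> q) = (\<Oplus>\<^bsub>P\<^esub> l\<in>{..<n}. act (s (act p (x l))) (y l) \<oplus>\<^bsub>P\<^esub> act (s (act q (x l))) (y l))"
    unfolding F_ap[OF P.a_closed[OF p q]]
    by (rule P.finsum_cong'[OF refl]) (use p q s in \<open>auto simp: act_ad1 S_ad\<close>)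
  also have "\<dots> = F s p \<oplus>\<^bsub>P\<^esub> F s q" using p q s by (simp add: F_ap P.finsum_addf Pi_def)
  finally show "F s (p \<oplus>\<^bsub>P\<^esub> q) = F s p \<oplus>\<^bsub>P\<^esub> F s q" .
next
  fix p a assume "p \<in> carrier P" "a \<in> carrier A"
  then show "F s (act p a) = act (F s p) a" using F_lin[OF s] by simp
qed

lemma F_add: assumes "s \<in> carrier S" "s' \<in> carrier S"
  shows "F (s \<oplus>\<^bsub>S\<^esub> s') = F s \<oplus>\<^bsub>S\<^esub> F s'"
proof -
  interpret S: ring S by (rule ringS)
  show ?thesis
  proof (rule S_eqI)
    show "F (s \<oplus>\<^bsub>S\<^esub> s') \<in> carrier S" using F_T TS assms by blast
    show "F s \<oplus>\<^bsub>S\<^esub> F s' \<in> carrier S" using F_T TS assms by blast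
    fix p assume p: "p \<in> carrier P"
    have "F (s \<oplus>\<^bsub>S\<^esub> s') p = (\<Oplus>\<^bsub>P\<^esub> l\<in>{..<n}. act (s (act p (x l))) (y l) \<oplus>\<^bsub>P\<^esub> act (s' (act p (x l))) (y l))"
      unfolding F_ap[OF p]
      by (rule P.finsum_cong'[OF refl]) (use p assms in \<open>auto simp: act_ad1 S_add\<close>)
    also have "\<dots> = (F s \<oplus>\<^bsub>S\<^esub> F s') p" using p assms by (simp add: F_ap S_add P.finsum_addf Pi_def)
    finally show "F (s \<oplus>\<^bsub>S\<^esub> s') p = (F s \<oplus>\<^bsub>S\<^esub> F s') p" .
  qed
qed

lemma F_left: assumes t: "t \<in> carrier T" and s: "s \<in> carrier S"
  shows "F (t \<otimes>\<^bsub>S\<^esub> s) = t \<otimes>\<^bsub>S\<^esub> F s"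
proof -
  interpret S: ring S by (rule ringS)
  have tS: "t \<in> carrier S" using t TS by blast
  show ?thesis
  proof (rule S_eqI)
    show "F (t \<otimes>\<^bsub>S\<^esub> s) \<in> carrier S" using F_T TS s tS by blast
    show "t \<otimes>\<^bsub>S\<^esub> F s \<in> carrier S" using F_T TS s tS by blast
    fix p assume p: "p \<in> carrier P"
    have "F (t \<otimes>\<^bsub>S\<^esub> s) p = (\<Oplus>\<^bsub>P\<^esub> l\<in>{..<n}. t (act (s (act p (x l))) (y l)))"
      using p s t tS by (auto simp: F_ap S_mult T_lin intro!: P.finsum_cong')
    also have "\<dots> = t (F s p)" using p s tS by (simp add: F_ap sum_PP[OF ah_S] Pi_def)
    finally show "F (t \<otimes>\<^bsub>S\<^esub> s) p = (t \<otimes>\<^bsub>S\<^esub> F s) p" using p by (simp add: S_mult)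
  qed
qed

lemma F_right: assumes t: "t \<in> carrier T" and s: "s \<in> carrier S"
  shows "F (s \<otimes>\<^bsub>S\<^esub> t) = F s \<otimes>\<^bsub>S\<^esub> t"
proof -
  interpret S: ring S by (rule ringS)
  have tS: "t \<in> carrier S" using t TS by blast
  show ?thesis
  proof (rule S_eqI)
    show "F (s \<otimes>\<^bsub>S\<^esub> t) \<in> carrier S" using F_T TS s tS by blast
    show "F s \<otimes>\<^bsub>S\<^esub> t \<in> carrier S" using F_T TS s tS by blast
    fix p assume p: "p \<in> carrier P"
    have "F (s \<otimes>\<^bsub>S\<^esub> t) p = (\<Oplus>\<^bsub>P\<^esub> l\<in>{..<n}. act (s (act (t p) (x l))) (y l))"
      using p s t tS by (auto simp: F_ap S_mult T_lin intro!: P.finsum_cong')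
    also have "\<dots> = F s (t p)" using p tS by (simp add: F_ap)
    finally show "F (s \<otimes>\<^bsub>S\<^esub> t) p = (F s \<otimes>\<^bsub>S\<^esub> t) p" using p by (simp add: S_mult)
  qed
qed

end




context fsetup begin

definition XX :: "nat \<times> nat \<times> nat \<Rightarrow> 'p \<Rightarrow> 'p" where
  "XX t = (case t of (j, i, k) \<Rightarrow> (\<lambda>q\<in>carrier P. act (pp j) (x i \<otimes>\<^bsub>A\<^esub> E (psi k q))))"
definition YY :: "nat \<times> nat \<times> nat \<Rightarrow> 'p \<Rightarrow> 'p" where
  "YY t = (case t of (j, i, k) \<Rightarrow> (\<lambda>q\<in>carrier P. act (qq k) (E (y i \<otimes>\<^bsub>A\<^esub> phi j q))))"

abbreviation "II \<equiv> {..<m} \<times> {..<n} \<times> {..<g}"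

lemma XX_ap: "q \<in> carrier P \<Longrightarrow> XX (j, i, k) q = act (pp j) (x i \<otimes>\<^bsub>A\<^esub> E (psi k q))"
  by (simp add: XX_def)
lemma YY_ap: "q \<in> carrier P \<Longrightarrow> YY (j, i, k) q = act (qq k) (E (y i \<otimes>\<^bsub>A\<^esub> phi j q))"
  by (simp add: YY_def)

lemma XX_S: assumes "j < m" "i < n" "k < g" shows "XX (j, i, k) \<in> carrier S"
  unfolding S_carrier
proof (intro conjI ballI)
  show "XX (j, i, k) \<in> carrier P \<rightarrow> carrier P" using assms by (auto simp: XX_ap)
  show "XX (j, i, k) \<in> extensional (carrier P)" by (simp add: XX_def)
  fix p q assume "p \<in> carrier P" "q \<in> carrier P"
  then show "XX (j, i, k) (p \<oplus>\<^bsub>P\<^esub> q) = XX (j, i, k) p \<oplus>\<^bsub>P\<^esub> XX (j, i, k) q"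
    using assms Ead by (simp add: XX_ap psi_ad A.r_distr act_ad2)
next
  fix p b assume p: "p \<in> carrier P" and b: "b \<in> B"
  then show "XX (j, i, k) (act p b) = act (XX (j, i, k) p) b"
    using assms Er by (simp add: XX_ap psi_lin act_as A.m_assoc)
qed

lemma YY_S: assumes "j < m" "i < n" "k < g" shows "YY (j, i, k) \<in> carrier S"
  unfolding S_carrier
proof (intro conjI ballI)
  show "YY (j, i, k) \<in> carrier P \<rightarrow> carrier P" using assms by (auto simp: YY_ap)
  show "YY (j, i, k) \<in> extensional (carrier P)" by (simp add: YY_def)
  fix p q assume "p \<in> carrier P" "q \<in> carrier P"
  then show "YY (j, i, k) (p \<oplus>\<^bsub>P\<^esub> q) = YY (j, i, k) p \<oplus>\<^bsub>P\<^esub> YY (j, i, k) q"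
    using assms Ead by (simp add: YY_ap phi_ad A.r_distr act_ad2)
next
  fix p b assume p: "p \<in> carrier P" and b: "b \<in> B"
  then show "YY (j, i, k) (act p b) = act (YY (j, i, k) p) b"
    using assms Er by (simp add: YY_ap phi_lin act_as A.m_assoc[symmetric])
qed

lemma XX_SI: "t \<in> II \<Longrightarrow> XX t \<in> carrier S" using XX_S by auto
lemma YY_SI: "t \<in> II \<Longrightarrow> YY t \<in> carrier S" using YY_S by auto

end




context fsetup begin

lemma gsum_h: assumes h: "addhom A P h" and z: "z \<in> carrier A"
  shows "(\<Oplus>\<^bsub>P\<^esub> k\<in>{..<g}. h (psi k (qq k) \<otimes>\<^bsub>A\<^esub> z)) = h z"
proof -
  have "(\<Oplus>\<^bsub>P\<^esub> k\<in>{..<g}. h (psi k (qq k) \<otimes>\<^bsub>A\<^esub> z)) = h ((\<Oplus>\<^bsub>A\<^esub> k\<in>{..<g}. psi k (qq k)) \<otimes>\<^bsub>A\<^esub> z)"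
    using sum_AP[OF addhom_comp[OF ah_rm[OF z] h], of "{..<g}" "\<lambda>k. psi k (qq k)"]
    by (simp add: Pi_def)
  also have "\<dots> = h z" using gsum z by simp
  finally show ?thesis .
qed

lemma sum_sp: assumes s: "s \<in> carrier S" and p: "p \<in> carrier P"
  shows "(\<Oplus>\<^bsub>P\<^esub> l\<in>{..<n}. act (s (act p (x l))) (E (y l))) = s p"
proof -
  have "(\<Oplus>\<^bsub>P\<^esub> l\<in>{..<n}. act (s (act p (x l))) (E (y l))) =
        (\<Oplus>\<^bsub>P\<^esub> l\<in>{..<n}. s (act p (x l \<otimes>\<^bsub>A\<^esub> E (y l \<otimes>\<^bsub>A\<^esub> \<one>\<^bsub>A\<^esub>))))"
    using s p by (intro P.finsum_cong') (auto simp: S_lin[symmetric] act_as)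
  also have "\<dots> = s (\<Oplus>\<^bsub>P\<^esub> l\<in>{..<n}. act p (x l \<otimes>\<^bsub>A\<^esub> E (y l \<otimes>\<^bsub>A\<^esub> \<one>\<^bsub>A\<^esub>)))"
    using s p by (subst sum_PP[OF ah_S]) (auto simp: Pi_def)
  also have "\<dots> = s (act p (\<Oplus>\<^bsub>A\<^esub> l\<in>{..<n}. x l \<otimes>\<^bsub>A\<^esub> E (y l \<otimes>\<^bsub>A\<^esub> \<one>\<^bsub>A\<^esub>)))"
    using s p by (subst sum_AP[OF ah_act2]) (auto simp: Pi_def)
  also have "\<dots> = s p" using id2 p by simp
  finally show ?thesis .
qed

lemma T2term:
  assumes jik: "j < m" "i < n" "k < g" and s: "s \<in> carrier S" and p: "p \<in> carrier P"
  shows "(XX (j, i, k) \<otimes>\<^bsub>S\<^esub> F (YY (j, i, k) \<otimes>\<^bsub>S\<^esub> s)) p =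
    (\<Oplus>\<^bsub>P\<^esub> l\<in>{..<n}. act (pp j) (x i \<otimes>\<^bsub>A\<^esub> E (psi k (qq k) \<otimes>\<^bsub>A\<^esub> (E (y i \<otimes>\<^bsub>A\<^esub> phi j (s (act p (x l)))) \<otimes>\<^bsub>A\<^esub> y l))))"
proof -
  interpret S: ring S by (rule ringS)
  have YS: "YY (j, i, k) \<otimes>\<^bsub>S\<^esub> s \<in> carrier S" using YY_S[OF jik] s by simp
  have "F (YY (j, i, k) \<otimes>\<^bsub>S\<^esub> s) p = (\<Oplus>\<^bsub>P\<^esub> l\<in>{..<n}. act (qq k) (E (y i \<otimes>\<^bsub>A\<^esub> phi j (s (act p (x l)))) \<otimes>\<^bsub>A\<^esub> y l))"
    unfolding F_ap[OF p] using jik s p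
    by (intro P.finsum_cong') (auto simp: S_mult YY_ap act_as)
  then have "(XX (j, i, k) \<otimes>\<^bsub>S\<^esub> F (YY (j, i, k) \<otimes>\<^bsub>S\<^esub> s)) p =
     XX (j, i, k) (\<Oplus>\<^bsub>P\<^esub> l\<in>{..<n}. act (qq k) (E (y i \<otimes>\<^bsub>A\<^esub> phi j (s (act p (x l)))) \<otimes>\<^bsub>A\<^esub> y l))"
    using p by (simp add: S_mult)
  also have "\<dots> = (\<Oplus>\<^bsub>P\<^esub> l\<in>{..<n}. XX (j, i, k) (act (qq k) (E (y i \<otimes>\<^bsub>A\<^esub> phi j (s (act p (x l)))) \<otimes>\<^bsub>A\<^esub> y l)))"
    using jik s p by (subst sum_PP[OF ah_S[OF XX_S[OF jik]]]) (auto simp: Pi_def)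
  also have "\<dots> = (\<Oplus>\<^bsub>P\<^esub> l\<in>{..<n}. act (pp j) (x i \<otimes>\<^bsub>A\<^esub> E (psi k (qq k) \<otimes>\<^bsub>A\<^esub> (E (y i \<otimes>\<^bsub>A\<^esub> phi j (s (act p (x l)))) \<otimes>\<^bsub>A\<^esub> y l))))"
    using jik s p by (intro P.finsum_cong') (auto simp: XX_ap psi_lin)
  finally show ?thesis .
qed

lemma E2_pt: assumes s: "s \<in> carrier S" and p: "p \<in> carrier P"
  shows "finsum S (\<lambda>t. XX t \<otimes>\<^bsub>S\<^esub> F (YY t \<otimes>\<^bsub>S\<^esub> s)) II p = s p"
proof -
  interpret S: ring S by (rule ringS)
  define a where "a l = s (act p (x l))" for l
  have ac: "l < n \<Longrightarrow> a l \<in> carrier P" for l using s p by (simp add: a_def)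
  define c where "c j i l = E (y i \<otimes>\<^bsub>A\<^esub> phi j (a l))" for j i l
  have cB: "j < m \<Longrightarrow> i < n \<Longrightarrow> l < n \<Longrightarrow> c j i l \<in> B" for j i l using ac by (simp add: c_def)
  have cc: "j < m \<Longrightarrow> i < n \<Longrightarrow> l < n \<Longrightarrow> c j i l \<in> carrier A" for j i l using cB by simp
  have FS: "t \<in> II \<Longrightarrow> XX t \<otimes>\<^bsub>S\<^esub> F (YY t \<otimes>\<^bsub>S\<^esub> s) \<in> carrier S" for t
    using XX_SI YY_SI F_T TS s by blast
  have "finsum S (\<lambda>t. XX t \<otimes>\<^bsub>S\<^esub> F (YY t \<otimes>\<^bsub>S\<^esub> s)) II p = (\<Oplus>\<^bsub>P\<^esub> t\<in>II. (XX t \<otimes>\<^bsub>S\<^esub> F (YY t \<otimes>\<^bsub>S\<^esub> s)) p)"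
    using FS p by (intro S_finsum) auto
  also have "\<dots> = (\<Oplus>\<^bsub>P\<^esub> j\<in>{..<m}. \<Oplus>\<^bsub>P\<^esub> ik\<in>{..<n} \<times> {..<g}. (XX (j, ik) \<otimes>\<^bsub>S\<^esub> F (YY (j, ik) \<otimes>\<^bsub>S\<^esub> s)) p)"
    using FS p by (intro P.finsum_prod) auto
  also have "\<dots> = (\<Oplus>\<^bsub>P\<^esub> j\<in>{..<m}. \<Oplus>\<^bsub>P\<^esub> i\<in>{..<n}. \<Oplus>\<^bsub>P\<^esub> k\<in>{..<g}.
       \<Oplus>\<^bsub>P\<^esub> l\<in>{..<n}. act (pp j) (x i \<otimes>\<^bsub>A\<^esub> E (psi k (qq k) \<otimes>\<^bsub>A\<^esub> (c j i l \<otimes>\<^bsub>A\<^esub> y l))))"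
  proof (rule P.finsum_cong'[OF refl])
    fix j assume j: "j \<in> {..<m}"
    have "(\<Oplus>\<^bsub>P\<^esub> ik\<in>{..<n} \<times> {..<g}. (XX (j, ik) \<otimes>\<^bsub>S\<^esub> F (YY (j, ik) \<otimes>\<^bsub>S\<^esub> s)) p)
      = (\<Oplus>\<^bsub>P\<^esub> i\<in>{..<n}. \<Oplus>\<^bsub>P\<^esub> k\<in>{..<g}. (XX (j, i, k) \<otimes>\<^bsub>S\<^esub> F (YY (j, i, k) \<otimes>\<^bsub>S\<^esub> s)) p)"
      using FS p j by (intro P.finsum_prod) auto
    also have "\<dots> = (\<Oplus>\<^bsub>P\<^esub> i\<in>{..<n}. \<Oplus>\<^bsub>P\<^esub> k\<in>{..<g}.
       \<Oplus>\<^bsub>P\<^esub> l\<in>{..<n}. act (pp j) (x i \<otimes>\<^bsub>A\<^esub> E (psi k (qq k) \<otimes>\<^bsub>A\<^esub> (c j i l \<otimes>\<^bsub>A\<^esub> y l))))"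
      using j s p cc by (intro P.finsum_cong') (auto simp: T2term c_def a_def intro!: P.finsum_closed)
    finally show "(\<Oplus>\<^bsub>P\<^esub> ik\<in>{..<n} \<times> {..<g}. (XX (j, ik) \<otimes>\<^bsub>S\<^esub> F (YY (j, ik) \<otimes>\<^bsub>S\<^esub> s)) p)
      = (\<Oplus>\<^bsub>P\<^esub> i\<in>{..<n}. \<Oplus>\<^bsub>P\<^esub> k\<in>{..<g}.
       \<Oplus>\<^bsub>P\<^esub> l\<in>{..<n}. act (pp j) (x i \<otimes>\<^bsub>A\<^esub> E (psi k (qq k) \<otimes>\<^bsub>A\<^esub> (c j i l \<otimes>\<^bsub>A\<^esub> y l))))" .
  qed (use cc in \<open>auto intro!: P.finsum_closed\<close>)
  also have "\<dots> = (\<Oplus>\<^bsub>P\<^esub> j\<in>{..<m}. \<Oplus>\<^bsub>P\<^esub> i\<in>{..<n}.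
       \<Oplus>\<^bsub>P\<^esub> l\<in>{..<n}. act (pp j) (x i \<otimes>\<^bsub>A\<^esub> (c j i l \<otimes>\<^bsub>A\<^esub> E (y l))))"
  proof (rule P.finsum_cong'[OF refl])
    fix j assume j: "j \<in> {..<m}"
    show "(\<Oplus>\<^bsub>P\<^esub> i\<in>{..<n}. \<Oplus>\<^bsub>P\<^esub> k\<in>{..<g}. \<Oplus>\<^bsub>P\<^esub> l\<in>{..<n}. act (pp j) (x i \<otimes>\<^bsub>A\<^esub> E (psi k (qq k) \<otimes>\<^bsub>A\<^esub> (c j i l \<otimes>\<^bsub>A\<^esub> y l))))
      = (\<Oplus>\<^bsub>P\<^esub> i\<in>{..<n}. \<Oplus>\<^bsub>P\<^esub> l\<in>{..<n}. act (pp j) (x i \<otimes>\<^bsub>A\<^esub> (c j i l \<otimes>\<^bsub>A\<^esub> E (y l))))"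
    proof (rule P.finsum_cong'[OF refl])
    fix i assume i: "i \<in> {..<n}"
    have "(\<Oplus>\<^bsub>P\<^esub> k\<in>{..<g}. \<Oplus>\<^bsub>P\<^esub> l\<in>{..<n}. act (pp j) (x i \<otimes>\<^bsub>A\<^esub> E (psi k (qq k) \<otimes>\<^bsub>A\<^esub> (c j i l \<otimes>\<^bsub>A\<^esub> y l))))
      = (\<Oplus>\<^bsub>P\<^esub> l\<in>{..<n}. \<Oplus>\<^bsub>P\<^esub> k\<in>{..<g}. act (pp j) (x i \<otimes>\<^bsub>A\<^esub> E (psi k (qq k) \<otimes>\<^bsub>A\<^esub> (c j i l \<otimes>\<^bsub>A\<^esub> y l))))"
      using j i cc by (intro P.finsum_swap) auto
    also have "\<dots> = (\<Oplus>\<^bsub>P\<^esub> l\<in>{..<n}. act (pp j) (x i \<otimes>\<^bsub>A\<^esub> E (c j i l \<otimes>\<^bsub>A\<^esub> y l)))"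
    proof (rule P.finsum_cong'[OF refl])
      fix l assume l: "l \<in> {..<n}"
      have h: "addhom A P (\<lambda>u. act (pp j) (x i \<otimes>\<^bsub>A\<^esub> E u))"
        using j i by (intro addhom_comp[OF ah_E] addhom_comp[OF ah_lm ah_act2]) auto
      show "(\<Oplus>\<^bsub>P\<^esub> k\<in>{..<g}. act (pp j) (x i \<otimes>\<^bsub>A\<^esub> E (psi k (qq k) \<otimes>\<^bsub>A\<^esub> (c j i l \<otimes>\<^bsub>A\<^esub> y l))))
          = act (pp j) (x i \<otimes>\<^bsub>A\<^esub> E (c j i l \<otimes>\<^bsub>A\<^esub> y l))"
        using gsum_h[OF h, of "c j i l \<otimes>\<^bsub>A\<^esub> y l"] j i l cc by simp
    qed (use j i cc in auto)
    also have "\<dots> = (\<Oplus>\<^bsub>P\<^esub> l\<in>{..<n}. act (pp j) (x i \<otimes>\<^bsub>A\<^esub> (c j i l \<otimes>\<^bsub>A\<^esub> E (y l))))"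
      using j i cB El by (intro P.finsum_cong') auto
    finally show "(\<Oplus>\<^bsub>P\<^esub> k\<in>{..<g}. \<Oplus>\<^bsub>P\<^esub> l\<in>{..<n}. act (pp j) (x i \<otimes>\<^bsub>A\<^esub> E (psi k (qq k) \<otimes>\<^bsub>A\<^esub> (c j i l \<otimes>\<^bsub>A\<^esub> y l))))
      = (\<Oplus>\<^bsub>P\<^esub> l\<in>{..<n}. act (pp j) (x i \<otimes>\<^bsub>A\<^esub> (c j i l \<otimes>\<^bsub>A\<^esub> E (y l))))" .
    qed (use j cc in \<open>auto intro!: P.finsum_closed\<close>)
  qed (use cc in \<open>auto intro!: P.finsum_closed\<close>)
  also have "\<dots> = (\<Oplus>\<^bsub>P\<^esub> j\<in>{..<m}. \<Oplus>\<^bsub>P\<^esub> l\<in>{..<n}. act (pp j) (phi j (a l) \<otimes>\<^bsub>A\<^esub> E (y l)))"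
  proof (rule P.finsum_cong'[OF refl])
    fix j assume j: "j \<in> {..<m}"
    have "(\<Oplus>\<^bsub>P\<^esub> i\<in>{..<n}. \<Oplus>\<^bsub>P\<^esub> l\<in>{..<n}. act (pp j) (x i \<otimes>\<^bsub>A\<^esub> (c j i l \<otimes>\<^bsub>A\<^esub> E (y l))))
       = (\<Oplus>\<^bsub>P\<^esub> l\<in>{..<n}. \<Oplus>\<^bsub>P\<^esub> i\<in>{..<n}. act (pp j) (x i \<otimes>\<^bsub>A\<^esub> (c j i l \<otimes>\<^bsub>A\<^esub> E (y l))))"
      using j cc by (intro P.finsum_swap) auto
    also have "\<dots> = (\<Oplus>\<^bsub>P\<^esub> l\<in>{..<n}. act (pp j) (phi j (a l) \<otimes>\<^bsub>A\<^esub> E (y l)))"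
    proof (rule P.finsum_cong'[OF refl])
      fix l assume l: "l \<in> {..<n}"
      have h: "addhom A P (\<lambda>u. act (pp j) (u \<otimes>\<^bsub>A\<^esub> E (y l)))"
        using j l by (intro addhom_comp[OF ah_rm ah_act2]) auto
      have "(\<Oplus>\<^bsub>P\<^esub> i\<in>{..<n}. act (pp j) (x i \<otimes>\<^bsub>A\<^esub> (c j i l \<otimes>\<^bsub>A\<^esub> E (y l))))
          = (\<Oplus>\<^bsub>P\<^esub> i\<in>{..<n}. act (pp j) ((x i \<otimes>\<^bsub>A\<^esub> c j i l) \<otimes>\<^bsub>A\<^esub> E (y l)))"
        using j l cc by (intro P.finsum_cong') (auto simp: A.m_assoc)
      also have "\<dots> = act (pp j) ((\<Oplus>\<^bsub>A\<^esub> i\<in>{..<n}. x i \<otimes>\<^bsub>A\<^esub> c j i l) \<otimes>\<^bsub>A\<^esub> E (y l))"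
        using sum_AP[OF h, of "{..<n}" "\<lambda>i. x i \<otimes>\<^bsub>A\<^esub> c j i l"] j l cc by (simp add: Pi_def)
      also have "\<dots> = act (pp j) (phi j (a l) \<otimes>\<^bsub>A\<^esub> E (y l))"
        using id2 j l ac by (simp add: c_def)
      finally show "(\<Oplus>\<^bsub>P\<^esub> i\<in>{..<n}. act (pp j) (x i \<otimes>\<^bsub>A\<^esub> (c j i l \<otimes>\<^bsub>A\<^esub> E (y l))))
          = act (pp j) (phi j (a l) \<otimes>\<^bsub>A\<^esub> E (y l))" .
    qed (use j ac in auto)
    finally show "(\<Oplus>\<^bsub>P\<^esub> i\<in>{..<n}. \<Oplus>\<^bsub>P\<^esub> l\<in>{..<n}. act (pp j) (x i \<otimes>\<^bsub>A\<^esub> (c j i l \<otimes>\<^bsub>A\<^esub> E (y l))))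
       = (\<Oplus>\<^bsub>P\<^esub> l\<in>{..<n}. act (pp j) (phi j (a l) \<otimes>\<^bsub>A\<^esub> E (y l)))" .
  qed (use ac in \<open>auto intro!: P.finsum_closed\<close>)
  also have "\<dots> = (\<Oplus>\<^bsub>P\<^esub> j\<in>{..<m}. act (pp j) (phi j (s p)))"
  proof (rule P.finsum_cong'[OF refl])
    fix j assume j: "j \<in> {..<m}"
    have h: "addhom P P (\<lambda>u. act (pp j) (phi j u))"
      using j by (intro addhom_comp[OF ah_phi ah_act2]) auto
    have "(\<Oplus>\<^bsub>P\<^esub> l\<in>{..<n}. act (pp j) (phi j (a l) \<otimes>\<^bsub>A\<^esub> E (y l)))
        = (\<Oplus>\<^bsub>P\<^esub> l\<in>{..<n}. act (pp j) (phi j (act (a l) (E (y l)))))"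
      using j ac by (intro P.finsum_cong') (auto simp: phi_lin)
    also have "\<dots> = act (pp j) (phi j (\<Oplus>\<^bsub>P\<^esub> l\<in>{..<n}. act (a l) (E (y l))))"
      using sum_PP[OF h, of "{..<n}" "\<lambda>l. act (a l) (E (y l))"] j ac by (simp add: Pi_def)
    also have "\<dots> = act (pp j) (phi j (s p))"
      using sum_sp[OF s p] by (simp add: a_def)
    finally show "(\<Oplus>\<^bsub>P\<^esub> l\<in>{..<n}. act (pp j) (phi j (a l) \<otimes>\<^bsub>A\<^esub> E (y l))) = act (pp j) (phi j (s p))" .
  qed (use s p in auto)
  also have "\<dots> = s p" using pdec s p by simp
  finally show ?thesis .
qed

end




context fsetup begin

lemma gsum_h1: assumes h: "addhom A P h" and z: "z \<in> carrier A"
  shows "(\<Oplus>\<^bsub>P\<^esub> k\<in>{..<g}. h (psi k (qq k) \<otimes>\<^bsub>A\<^esub> z)) = h z"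
proof -
  have "(\<Oplus>\<^bsub>P\<^esub> k\<in>{..<g}. h (psi k (qq k) \<otimes>\<^bsub>A\<^esub> z)) = h ((\<Oplus>\<^bsub>A\<^esub> k\<in>{..<g}. psi k (qq k)) \<otimes>\<^bsub>A\<^esub> z)"
    using sum_AP[OF addhom_comp[OF ah_rm[OF z] h], of "{..<g}" "\<lambda>k. psi k (qq k)"]
    by (simp add: Pi_def)
  also have "\<dots> = h z" using gsum z by simp
  finally show ?thesis .
qed

lemma T1term:
  assumes jik: "j < m" "i < n" "k < g" and s: "s \<in> carrier S" and p: "p \<in> carrier P"
  shows "(F (s \<otimes>\<^bsub>S\<^esub> XX (j, i, k)) \<otimes>\<^bsub>S\<^esub> YY (j, i, k)) p =
    (\<Oplus>\<^bsub>P\<^esub> l\<in>{..<n}. act (s (act (pp j) (x i \<otimes>\<^bsub>A\<^esub> E (psi k (qq k) \<otimes>\<^bsub>A\<^esub> (E (y i \<otimes>\<^bsub>A\<^esub> phi j p) \<otimes>\<^bsub>A\<^esub> x l))))) (y l))"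
proof -
  have Yp: "YY (j, i, k) p \<in> carrier P" using YY_S[OF jik] p by simp
  have "(F (s \<otimes>\<^bsub>S\<^esub> XX (j, i, k)) \<otimes>\<^bsub>S\<^esub> YY (j, i, k)) p = F (s \<otimes>\<^bsub>S\<^esub> XX (j, i, k)) (YY (j, i, k) p)"
    using p by (simp add: S_mult)
  also have "\<dots> = (\<Oplus>\<^bsub>P\<^esub> l\<in>{..<n}. act (s (act (pp j) (x i \<otimes>\<^bsub>A\<^esub> E (psi k (qq k) \<otimes>\<^bsub>A\<^esub> (E (y i \<otimes>\<^bsub>A\<^esub> phi j p) \<otimes>\<^bsub>A\<^esub> x l))))) (y l))"
    unfolding F_ap[OF Yp] using jik s p
    by (intro P.finsum_cong') (auto simp: S_mult YY_ap XX_ap act_as psi_lin)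
  finally show ?thesis .
qed

lemma E1_pt: assumes s: "s \<in> carrier S" and p: "p \<in> carrier P"
  shows "finsum S (\<lambda>t. F (s \<otimes>\<^bsub>S\<^esub> XX t) \<otimes>\<^bsub>S\<^esub> YY t) II p = s p"
proof -
  interpret S: ring S by (rule ringS)
  define c where "c j i = E (y i \<otimes>\<^bsub>A\<^esub> phi j p)" for j i
  have cB: "j < m \<Longrightarrow> i < n \<Longrightarrow> c j i \<in> B" for j i using p by (simp add: c_def)
  have cc: "j < m \<Longrightarrow> i < n \<Longrightarrow> c j i \<in> carrier A" for j i using cB by simp
  have FS: "t \<in> II \<Longrightarrow> F (s \<otimes>\<^bsub>S\<^esub> XX t) \<otimes>\<^bsub>S\<^esub> YY t \<in> carrier S" for t
    using XX_SI YY_SI F_T TS s by blast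
  have "finsum S (\<lambda>t. F (s \<otimes>\<^bsub>S\<^esub> XX t) \<otimes>\<^bsub>S\<^esub> YY t) II p = (\<Oplus>\<^bsub>P\<^esub> t\<in>II. (F (s \<otimes>\<^bsub>S\<^esub> XX t) \<otimes>\<^bsub>S\<^esub> YY t) p)"
    using FS p by (intro S_finsum) auto
  also have "\<dots> = (\<Oplus>\<^bsub>P\<^esub> j\<in>{..<m}. \<Oplus>\<^bsub>P\<^esub> ik\<in>{..<n} \<times> {..<g}. (F (s \<otimes>\<^bsub>S\<^esub> XX (j, ik)) \<otimes>\<^bsub>S\<^esub> YY (j, ik)) p)"
    using FS p by (intro P.finsum_prod) auto
  also have "\<dots> = (\<Oplus>\<^bsub>P\<^esub> j\<in>{..<m}. \<Oplus>\<^bsub>P\<^esub> i\<in>{..<n}. \<Oplus>\<^bsub>P\<^esub> k\<in>{..<g}.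
       \<Oplus>\<^bsub>P\<^esub> l\<in>{..<n}. act (s (act (pp j) (x i \<otimes>\<^bsub>A\<^esub> E (psi k (qq k) \<otimes>\<^bsub>A\<^esub> (c j i \<otimes>\<^bsub>A\<^esub> x l))))) (y l))"
  proof (rule P.finsum_cong'[OF refl])
    fix j assume j: "j \<in> {..<m}"
    have "(\<Oplus>\<^bsub>P\<^esub> ik\<in>{..<n} \<times> {..<g}. (F (s \<otimes>\<^bsub>S\<^esub> XX (j, ik)) \<otimes>\<^bsub>S\<^esub> YY (j, ik)) p)
      = (\<Oplus>\<^bsub>P\<^esub> i\<in>{..<n}. \<Oplus>\<^bsub>P\<^esub> k\<in>{..<g}. (F (s \<otimes>\<^bsub>S\<^esub> XX (j, i, k)) \<otimes>\<^bsub>S\<^esub> YY (j, i, k)) p)"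
      using FS p j by (intro P.finsum_prod) auto
    also have "\<dots> = (\<Oplus>\<^bsub>P\<^esub> i\<in>{..<n}. \<Oplus>\<^bsub>P\<^esub> k\<in>{..<g}.
       \<Oplus>\<^bsub>P\<^esub> l\<in>{..<n}. act (s (act (pp j) (x i \<otimes>\<^bsub>A\<^esub> E (psi k (qq k) \<otimes>\<^bsub>A\<^esub> (c j i \<otimes>\<^bsub>A\<^esub> x l))))) (y l))"
      using j s p cc by (intro P.finsum_cong') (auto simp: T1term c_def intro!: P.finsum_closed)
    finally show "(\<Oplus>\<^bsub>P\<^esub> ik\<in>{..<n} \<times> {..<g}. (F (s \<otimes>\<^bsub>S\<^esub> XX (j, ik)) \<otimes>\<^bsub>S\<^esub> YY (j, ik)) p)
      = (\<Oplus>\<^bsub>P\<^esub> i\<in>{..<n}. \<Oplus>\<^bsub>P\<^esub> k\<in>{..<g}.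
       \<Oplus>\<^bsub>P\<^esub> l\<in>{..<n}. act (s (act (pp j) (x i \<otimes>\<^bsub>A\<^esub> E (psi k (qq k) \<otimes>\<^bsub>A\<^esub> (c j i \<otimes>\<^bsub>A\<^esub> x l))))) (y l))" .
  qed (use cc s in \<open>auto intro!: P.finsum_closed\<close>)
  also have "\<dots> = (\<Oplus>\<^bsub>P\<^esub> j\<in>{..<m}. \<Oplus>\<^bsub>P\<^esub> i\<in>{..<n}.
       \<Oplus>\<^bsub>P\<^esub> l\<in>{..<n}. act (s (act (pp j) (x i \<otimes>\<^bsub>A\<^esub> (c j i \<otimes>\<^bsub>A\<^esub> E (x l))))) (y l))"
  proof (rule P.finsum_cong'[OF refl])
    fix j assume j: "j \<in> {..<m}"
    show "(\<Oplus>\<^bsub>P\<^esub> i\<in>{..<n}. \<Oplus>\<^bsub>P\<^esub> k\<in>{..<g}. \<Oplus>\<^bsub>P\<^esub> l\<in>{..<n}. act (s (act (pp j) (x i \<otimes>\<^bsub>A\<^esub> E (psi k (qq k) \<otimes>\<^bsub>A\<^esub> (c j i \<otimes>\<^bsub>A\<^esub> x l))))) (y l))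
      = (\<Oplus>\<^bsub>P\<^esub> i\<in>{..<n}. \<Oplus>\<^bsub>P\<^esub> l\<in>{..<n}. act (s (act (pp j) (x i \<otimes>\<^bsub>A\<^esub> (c j i \<otimes>\<^bsub>A\<^esub> E (x l))))) (y l))"
    proof (rule P.finsum_cong'[OF refl])
      fix i assume i: "i \<in> {..<n}"
      have "(\<Oplus>\<^bsub>P\<^esub> k\<in>{..<g}. \<Oplus>\<^bsub>P\<^esub> l\<in>{..<n}. act (s (act (pp j) (x i \<otimes>\<^bsub>A\<^esub> E (psi k (qq k) \<otimes>\<^bsub>A\<^esub> (c j i \<otimes>\<^bsub>A\<^esub> x l))))) (y l))
        = (\<Oplus>\<^bsub>P\<^esub> l\<in>{..<n}. \<Oplus>\<^bsub>P\<^esub> k\<in>{..<g}. act (s (act (pp j) (x i \<otimes>\<^bsub>A\<^esub> E (psi k (qq k) \<otimes>\<^bsub>A\<^esub> (c j i \<otimes>\<^bsub>A\<^esub> x l))))) (y l))"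
        using j i cc s by (intro P.finsum_swap) auto
      also have "\<dots> = (\<Oplus>\<^bsub>P\<^esub> l\<in>{..<n}. act (s (act (pp j) (x i \<otimes>\<^bsub>A\<^esub> E (c j i \<otimes>\<^bsub>A\<^esub> x l)))) (y l))"
      proof (rule P.finsum_cong'[OF refl])
        fix l assume l: "l \<in> {..<n}"
        have h: "addhom A P (\<lambda>u. act (s (act (pp j) (x i \<otimes>\<^bsub>A\<^esub> E u))) (y l))"
          using j i l s by (intro addhom_comp[OF ah_E] addhom_comp[OF ah_lm] addhom_comp[OF ah_act2]
              addhom_comp[OF ah_S ah_act1]) auto
        show "(\<Oplus>\<^bsub>P\<^esub> k\<in>{..<g}. act (s (act (pp j) (x i \<otimes>\<^bsub>A\<^esub> E (psi k (qq k) \<otimes>\<^bsub>A\<^esub> (c j i \<otimes>\<^bsub>A\<^esub> x l))))) (y l))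
            = act (s (act (pp j) (x i \<otimes>\<^bsub>A\<^esub> E (c j i \<otimes>\<^bsub>A\<^esub> x l)))) (y l)"
          using gsum_h1[OF h, of "c j i \<otimes>\<^bsub>A\<^esub> x l"] j i l cc by simp
      qed (use j i cc s in auto)
      also have "\<dots> = (\<Oplus>\<^bsub>P\<^esub> l\<in>{..<n}. act (s (act (pp j) (x i \<otimes>\<^bsub>A\<^esub> (c j i \<otimes>\<^bsub>A\<^esub> E (x l))))) (y l))"
        using j i cB El s by (intro P.finsum_cong') auto
      finally show "(\<Oplus>\<^bsub>P\<^esub> k\<in>{..<g}. \<Oplus>\<^bsub>P\<^esub> l\<in>{..<n}. act (s (act (pp j) (x i \<otimes>\<^bsub>A\<^esub> E (psi k (qq k) \<otimes>\<^bsub>A\<^esub> (c j i \<otimes>\<^bsub>A\<^esub> x l))))) (y l))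
        = (\<Oplus>\<^bsub>P\<^esub> l\<in>{..<n}. act (s (act (pp j) (x i \<otimes>\<^bsub>A\<^esub> (c j i \<otimes>\<^bsub>A\<^esub> E (x l))))) (y l))" .
    qed (use j cc s in \<open>auto intro!: P.finsum_closed\<close>)
  qed (use cc s in \<open>auto intro!: P.finsum_closed\<close>)
  also have "\<dots> = (\<Oplus>\<^bsub>P\<^esub> j\<in>{..<m}. \<Oplus>\<^bsub>P\<^esub> l\<in>{..<n}. act (s (act (act (pp j) (phi j p)) (E (x l)))) (y l))"
  proof (rule P.finsum_cong'[OF refl])
    fix j assume j: "j \<in> {..<m}"
    have "(\<Oplus>\<^bsub>P\<^esub> i\<in>{..<n}. \<Oplus>\<^bsub>P\<^esub> l\<in>{..<n}. act (s (act (pp j) (x i \<otimes>\<^bsub>A\<^esub> (c j i \<otimes>\<^bsub>A\<^esub> E (x l))))) (y l))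
       = (\<Oplus>\<^bsub>P\<^esub> l\<in>{..<n}. \<Oplus>\<^bsub>P\<^esub> i\<in>{..<n}. act (s (act (pp j) (x i \<otimes>\<^bsub>A\<^esub> (c j i \<otimes>\<^bsub>A\<^esub> E (x l))))) (y l))"
      using j cc s by (intro P.finsum_swap) auto
    also have "\<dots> = (\<Oplus>\<^bsub>P\<^esub> l\<in>{..<n}. act (s (act (act (pp j) (phi j p)) (E (x l)))) (y l))"
    proof (rule P.finsum_cong'[OF refl])
      fix l assume l: "l \<in> {..<n}"
      have h: "addhom A P (\<lambda>u. act (s (act (pp j) (u \<otimes>\<^bsub>A\<^esub> E (x l)))) (y l))"
        using j l s by (intro addhom_comp[OF ah_rm] addhom_comp[OF ah_act2] addhom_comp[OF ah_S ah_act1]) auto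
      have "(\<Oplus>\<^bsub>P\<^esub> i\<in>{..<n}. act (s (act (pp j) (x i \<otimes>\<^bsub>A\<^esub> (c j i \<otimes>\<^bsub>A\<^esub> E (x l))))) (y l))
          = (\<Oplus>\<^bsub>P\<^esub> i\<in>{..<n}. act (s (act (pp j) ((x i \<otimes>\<^bsub>A\<^esub> c j i) \<otimes>\<^bsub>A\<^esub> E (x l)))) (y l))"
        using j l cc s by (intro P.finsum_cong') (auto simp: A.m_assoc)
      also have "\<dots> = act (s (act (pp j) ((\<Oplus>\<^bsub>A\<^esub> i\<in>{..<n}. x i \<otimes>\<^bsub>A\<^esub> c j i) \<otimes>\<^bsub>A\<^esub> E (x l)))) (y l)"
        using sum_AP[OF h, of "{..<n}" "\<lambda>i. x i \<otimes>\<^bsub>A\<^esub> c j i"] j l cc by (simp add: Pi_def)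
      also have "\<dots> = act (s (act (act (pp j) (phi j p)) (E (x l)))) (y l)"
        using id2 j l p by (simp add: c_def act_as)
      finally show "(\<Oplus>\<^bsub>P\<^esub> i\<in>{..<n}. act (s (act (pp j) (x i \<otimes>\<^bsub>A\<^esub> (c j i \<otimes>\<^bsub>A\<^esub> E (x l))))) (y l))
          = act (s (act (act (pp j) (phi j p)) (E (x l)))) (y l)" .
    qed (use j p s in auto)
    finally show "(\<Oplus>\<^bsub>P\<^esub> i\<in>{..<n}. \<Oplus>\<^bsub>P\<^esub> l\<in>{..<n}. act (s (act (pp j) (x i \<otimes>\<^bsub>A\<^esub> (c j i \<otimes>\<^bsub>A\<^esub> E (x l))))) (y l))
       = (\<Oplus>\<^bsub>P\<^esub> l\<in>{..<n}. act (s (act (act (pp j) (phi j p)) (E (x l)))) (y l))" .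
  qed (use p s in \<open>auto intro!: P.finsum_closed\<close>)
  also have "\<dots> = (\<Oplus>\<^bsub>P\<^esub> l\<in>{..<n}. \<Oplus>\<^bsub>P\<^esub> j\<in>{..<m}. act (s (act (act (pp j) (phi j p)) (E (x l)))) (y l))"
    using p s by (intro P.finsum_swap) auto
  also have "\<dots> = (\<Oplus>\<^bsub>P\<^esub> l\<in>{..<n}. act (s (act p (E (x l)))) (y l))"
  proof (rule P.finsum_cong'[OF refl])
    fix l assume l: "l \<in> {..<n}"
    have h: "addhom P P (\<lambda>u. act (s (act u (E (x l)))) (y l))"
      using l s by (intro addhom_comp[OF ah_act1] addhom_comp[OF ah_S ah_act1]) auto
    show "(\<Oplus>\<^bsub>P\<^esub> j\<in>{..<m}. act (s (act (act (pp j) (phi j p)) (E (x l)))) (y l)) = act (s (act p (E (x l)))) (y l)"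
      using sum_PP[OF h, of "{..<m}" "\<lambda>j. act (pp j) (phi j p)"] pdec p l by (simp add: Pi_def)
  qed (use p s in auto)
  also have "\<dots> = (\<Oplus>\<^bsub>P\<^esub> l\<in>{..<n}. act (s p) (E (\<one>\<^bsub>A\<^esub> \<otimes>\<^bsub>A\<^esub> x l) \<otimes>\<^bsub>A\<^esub> y l))"
    using p s by (intro P.finsum_cong') (auto simp: S_lin act_as)
  also have "\<dots> = act (s p) (\<Oplus>\<^bsub>A\<^esub> l\<in>{..<n}. E (\<one>\<^bsub>A\<^esub> \<otimes>\<^bsub>A\<^esub> x l) \<otimes>\<^bsub>A\<^esub> y l)"
    using p s by (subst sum_AP[OF ah_act2]) (auto simp: Pi_def)
  also have "\<dots> = s p" using id1 p s by simp
  finally show ?thesis .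
qed

end




context fsetup begin

lemma subT: "subring (carrier T) S"
proof -
  interpret S: ring S by (rule ringS)
  interpret T: ring T by (rule ringT)
  show ?thesis
  proof (rule S.subringI)
    show "carrier T \<subseteq> carrier S" by (rule TS)
    show "\<one>\<^bsub>S\<^esub> \<in> carrier T" by (simp add: S_ops)
  next
    fix h assume h: "h \<in> carrier T"
    have "\<ominus>\<^bsub>T\<^esub> h \<oplus>\<^bsub>S\<^esub> h = \<zero>\<^bsub>S\<^esub>" using T.l_neg[OF h] by (simp add: S_ops)
    then have "\<ominus>\<^bsub>S\<^esub> h = \<ominus>\<^bsub>T\<^esub> h" by (rule S.minus_equality) (use h TS T.a_inv_closed[OF h] in auto)
    then show "\<ominus>\<^bsub>S\<^esub> h \<in> carrier T" using T.a_inv_closed[OF h] by simp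
  next
    fix h1 h2 assume "h1 \<in> carrier T" "h2 \<in> carrier T"
    then show "h1 \<otimes>\<^bsub>S\<^esub> h2 \<in> carrier T" "h1 \<oplus>\<^bsub>S\<^esub> h2 \<in> carrier T"
      by (simp_all add: S_ops T.m_closed T.a_closed)
  qed
qed

lemma frobF: "frobenius_hom S (carrier T) F"
  unfolding frobenius_hom_def
proof (intro conjI ballI)
  interpret S: ring S by (rule ringS)
  show "F \<in> carrier S \<rightarrow> carrier T" using F_T by auto
  show "\<And>a a'. a \<in> carrier S \<Longrightarrow> a' \<in> carrier S \<Longrightarrow> F (a \<oplus>\<^bsub>S\<^esub> a') = F a \<oplus>\<^bsub>S\<^esub> F a'" by (rule F_add)
  show "\<And>b a. b \<in> carrier T \<Longrightarrow> a \<in> carrier S \<Longrightarrow> F (b \<otimes>\<^bsub>S\<^esub> a) = b \<otimes>\<^bsub>S\<^esub> F a" by (rule F_left)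
  show "\<And>b a. b \<in> carrier T \<Longrightarrow> a \<in> carrier S \<Longrightarrow> F (a \<otimes>\<^bsub>S\<^esub> b) = F a \<otimes>\<^bsub>S\<^esub> b" by (rule F_right)
  show "\<exists>(n::nat) x y. (\<forall>i<n. x i \<in> carrier S \<and> y i \<in> carrier S) \<and>
        (\<forall>a\<in>carrier S. (\<Oplus>\<^bsub>S\<^esub> i\<in>{..<n}. F (a \<otimes>\<^bsub>S\<^esub> x i) \<otimes>\<^bsub>S\<^esub> y i) = a \<and>
                        (\<Oplus>\<^bsub>S\<^esub> i\<in>{..<n}. x i \<otimes>\<^bsub>S\<^esub> F (y i \<otimes>\<^bsub>S\<^esub> a)) = a)"
  proof (rule frob_reindex[OF ringS, of II XX YY F])
    show "finite II" by simp
    show "XX \<in> II \<rightarrow> carrier S" using XX_SI by blast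
    show "YY \<in> II \<rightarrow> carrier S" using YY_SI by blast
    show "F \<in> carrier S \<rightarrow> carrier S" using F_T TS by blast
    show "\<forall>a\<in>carrier S. (\<Oplus>\<^bsub>S\<^esub> i\<in>II. F (a \<otimes>\<^bsub>S\<^esub> XX i) \<otimes>\<^bsub>S\<^esub> YY i) = a \<and>
                        (\<Oplus>\<^bsub>S\<^esub> i\<in>II. XX i \<otimes>\<^bsub>S\<^esub> F (YY i \<otimes>\<^bsub>S\<^esub> a)) = a"
    proof (intro ballI conjI)
      fix s assume s: "s \<in> carrier S"
      have m1: "F (s \<otimes>\<^bsub>S\<^esub> XX i) \<otimes>\<^bsub>S\<^esub> YY i \<in> carrier S" if i: "i \<in> II" for i
      proof -
        have "s \<otimes>\<^bsub>S\<^esub> XX i \<in> carrier S" using s XX_SI[OF i] by simp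
        then have "F (s \<otimes>\<^bsub>S\<^esub> XX i) \<in> carrier S" using F_T TS by blast
        then show ?thesis using YY_SI[OF i] by simp
      qed
      have m2: "XX i \<otimes>\<^bsub>S\<^esub> F (YY i \<otimes>\<^bsub>S\<^esub> s) \<in> carrier S" if i: "i \<in> II" for i
      proof -
        have "YY i \<otimes>\<^bsub>S\<^esub> s \<in> carrier S" using s YY_SI[OF i] by simp
        then have "F (YY i \<otimes>\<^bsub>S\<^esub> s) \<in> carrier S" using F_T TS by blast
        then show ?thesis using XX_SI[OF i] by simp
      qed
      have c1: "(\<Oplus>\<^bsub>S\<^esub> i\<in>II. F (s \<otimes>\<^bsub>S\<^esub> XX i) \<otimes>\<^bsub>S\<^esub> YY i) \<in> carrier S"
        using m1 m2 by (intro S.finsum_closed) auto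
      have c2: "(\<Oplus>\<^bsub>S\<^esub> i\<in>II. XX i \<otimes>\<^bsub>S\<^esub> F (YY i \<otimes>\<^bsub>S\<^esub> s)) \<in> carrier S"
        using m1 m2 by (intro S.finsum_closed) auto
      show "(\<Oplus>\<^bsub>S\<^esub> i\<in>II. F (s \<otimes>\<^bsub>S\<^esub> XX i) \<otimes>\<^bsub>S\<^esub> YY i) = s"
        by (rule S_eqI[OF c1 s]) (use E1_pt[OF s] in auto)
      show "(\<Oplus>\<^bsub>S\<^esub> i\<in>II. XX i \<otimes>\<^bsub>S\<^esub> F (YY i \<otimes>\<^bsub>S\<^esub> s)) = s"
        by (rule S_eqI[OF c2 s]) (use E2_pt[OF s] in auto)
    qed
  qed
qed

lemma frob_S: "frobenius_ext S (carrier T)"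
  unfolding frobenius_ext_def
  using ringS subT frob_fgp[OF ringS subT frobF] frobF by blast

end

theorem mainTheorem15:
  fixes A :: "'a ring" and B :: "'a set" and E :: "'a \<Rightarrow> 'a"
    and P :: "'p ring" and act :: "'p \<Rightarrow> 'a \<Rightarrow> 'p"
  assumes "frobenius_ext A B"
    and "frobenius_hom A B E"
    and "E ` carrier A = B"
    and "progenerator A P act"
  shows "frobenius_ext (end_ring (A\<lparr>carrier := B\<rparr>) P act) (carrier (end_ring A P act))"
proof -
  have A: "ring A" and sB: "subring B A" using assms(1) unfolding frobenius_ext_def by blast+
  have EB: "E \<in> carrier A \<rightarrow> B"
    and Ead: "\<forall>a\<in>carrier A. \<forall>a'\<in>carrier A. E (a \<oplus>\<^bsub>A\<^esub> a') = E a \<oplus>\<^bsub>A\<^esub> E a'"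
    and El: "\<forall>b\<in>B. \<forall>a\<in>carrier A. E (b \<otimes>\<^bsub>A\<^esub> a) = b \<otimes>\<^bsub>A\<^esub> E a"
    and Er: "\<forall>b\<in>B. \<forall>a\<in>carrier A. E (a \<otimes>\<^bsub>A\<^esub> b) = E a \<otimes>\<^bsub>A\<^esub> b"
    using assms(2) unfolding frobenius_hom_def by blast+
  obtain n :: nat and x y where xy: "\<forall>i<n. x i \<in> carrier A \<and> y i \<in> carrier A"
    and id: "\<forall>a\<in>carrier A. (\<Oplus>\<^bsub>A\<^esub> i\<in>{..<n}. E (a \<otimes>\<^bsub>A\<^esub> x i) \<otimes>\<^bsub>A\<^esub> y i) = a \<and>
                        (\<Oplus>\<^bsub>A\<^esub> i\<in>{..<n}. x i \<otimes>\<^bsub>A\<^esub> E (y i \<otimes>\<^bsub>A\<^esub> a)) = a"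
    using assms(2) unfolding frobenius_hom_def by blast
  have rm: "right_module A P act" using assms(4) unfolding progenerator_def by blast
  obtain m :: nat and pp phi where ppa: "\<forall>j<m. pp j \<in> carrier P \<and> rmod_hom A P act A (\<otimes>\<^bsub>A\<^esub>) (phi j)"
    and pdec: "\<forall>p\<in>carrier P. p = (\<Oplus>\<^bsub>P\<^esub> j\<in>{..<m}. act (pp j) (phi j p))"
    using assms(4) unfolding progenerator_def fg_projective_def by blast
  obtain g :: nat and psi where psih: "\<forall>k<g. rmod_hom A P act A (\<otimes>\<^bsub>A\<^esub>) (psi k)"
    and gall: "\<forall>r\<in>carrier A. \<exists>q. (\<forall>i<g. q i \<in> carrier P) \<and> r = (\<Oplus>\<^bsub>A\<^esub> i\<in>{..<g}. psi i (q i))"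
    using assms(4) unfolding progenerator_def generator_def by blast
  have one: "\<one>\<^bsub>A\<^esub> \<in> carrier A" by (rule monoid.one_closed[OF ring.is_monoid[OF A]])
  obtain qq where qq: "\<forall>i<g. qq i \<in> carrier P" and qs: "\<one>\<^bsub>A\<^esub> = (\<Oplus>\<^bsub>A\<^esub> i\<in>{..<g}. psi i (qq i))"
    using gall one by blast
  have id1: "\<forall>a\<in>carrier A. (\<Oplus>\<^bsub>A\<^esub> i\<in>{..<n}. E (a \<otimes>\<^bsub>A\<^esub> x i) \<otimes>\<^bsub>A\<^esub> y i) = a"
    and id2: "\<forall>a\<in>carrier A. (\<Oplus>\<^bsub>A\<^esub> i\<in>{..<n}. x i \<otimes>\<^bsub>A\<^esub> E (y i \<otimes>\<^bsub>A\<^esub> a)) = a"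
    using id by blast+
  have gen: "\<forall>k<g. rmod_hom A P act A (\<otimes>\<^bsub>A\<^esub>) (psi k) \<and> qq k \<in> carrier P"
    using psih qq by blast
  interpret fsetup A B E P act n x y m pp phi g psi qq
    by (rule fsetup.intro[OF A sB EB Ead El Er xy id1 id2 rm ppa pdec gen qs[symmetric]])
  show ?thesis by (rule frob_S)
qed



end
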